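(* Let $d\ge3$ and let $\mathcal C\subset\mathbb T^d=\mathbb R^d/\mathbb Z^d$ be a smooth curve of length $L$ with unit speed parameterization $\gamma:[0,L]\to\mathbb T^d$. For a positive integer $E$ with $\mathcal E(E)=\{\mu\in\mathbb Z^d:|\mu|^2=E\}$ nonempty, let $N=\#\mathcal E(E)$, $F(x)=N^{-1/2}\sum_{\mu\in\mathcal E(E)}a_\mu e^{2\pi i\langle\mu,x\rangle}$ with $a_\mu$ standard complex Gaussians independent save for $a_{-\mu}=\overline{a_\mu}$, $f(t)=F(\gamma(t))$, $r(t_1,t_2)=\mathbb E[f(t_1)f(t_2)]$, $r_1=\partial r/\partial t_1$, $r_2=\partial r/\partial t_2$, $r_{12}=\partial^2r/\partial t_1\partial t_2$. Define $K_1(t)=\frac{1}{\sqrt{2\pi}}\mathbb E\left[|f'(t)|\ \big|\ f(t)=0\right]$ and, whenever $r(t_1,t_2)\ne\pm1$, $$K_2(t_1,t_2)=\frac{1}{2\pi\sqrt{1-r^2}}\mathbb E\left[|f'(t_1)|\,|f'(t_2)|\ \Big|\ f(t_1)=f(t_2)=0\right].$$ For a constant $c_0>0$ let $k=\lfloor L\sqrt E/c_0\rfloor+1$, $\delta_0=L/k$, $I_i=[(i-1)\delta_0,i\delta_0]$ ($i=1,\dots,k$), and call the cube $S_{ij}=I_i\times I_j$ singular if it contains a point $(t_1,t_2)$ with $|r(t_1,t_2)|>1/2$; let $B$ be the union of all singular cubes. Then, for $c_0>0$ sufficiently small, for all $E$ and all $(t_1,t_2)\in[0,L]^2\setminus B$,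 $$\left|K_2(t_1,t_2)-K_1(t_1)K_1(t_2)\right|=E\cdot O\left(r^2+\left(\frac{r_1}{\sqrt E}\right)^2+\left(\frac{r_2}{\sqrt E}\right)^2+\left(\frac{r_{12}}{E}\right)^2\right),$$ where $r,r_1,r_2,r_{12}$ are evaluated at $(t_1,t_2)$ and the implied constant is independent of $E,t_1,t_2$.
   Context: A curve means a parameterized, compact, immersed curve. *)

theory Defs
  imports "HOL-Analysis.Analysis" "HOL-Probability.Probability"
begin

definition smooth_on :: "real set \<Rightarrow> (real \<Rightarrow> real^'d) \<Rightarrow> bool" where
  "smooth_on S g \<longleftrightarrow> open S \<and>
     (\<exists>D :: nat \<Rightarrow> real \<Rightarrow> real^'d. (\<forall>t\<in>S. D 0 t = g t) \<and>
        (\<forall>n. \<forall>t\<in>S. (D n has_vector_derivative D (Suc n) t) (at t)))"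

definition lattice_pts :: "nat \<Rightarrow> (int^'d) set" where
  "lattice_pts E = {\<mu>. (\<Sum>i\<in>UNIV. (\<mu> $ i)^2) = int E}"

definition lat_inner :: "int^'d \<Rightarrow> real^'d \<Rightarrow> real" where
  "lat_inner \<mu> x = (\<Sum>i\<in>UNIV. of_int (\<mu> $ i) * x $ i)"

text \<open>r(t1,t2) = E[f(t1) f(t2)] = (1/N) sum over mu of exp(2 pi i <mu, gamma(t1) - gamma(t2)>),
  which is real; written with cosines.\<close>
definition cov_r :: "(real \<Rightarrow> real^'d) \<Rightarrow> nat \<Rightarrow> real \<Rightarrow> real \<Rightarrow> real" where
  "cov_r \<gamma> E t1 t2 = (1 / real (card (lattice_pts E :: (int^'d) set))) *
     (\<Sum>\<mu>\<in>(lattice_pts E :: (int^'d) set). cos (2 * pi * lat_inner \<mu> (\<gamma> t1 - \<gamma> t2)))"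

definition cov_r1 :: "(real \<Rightarrow> real^'d) \<Rightarrow> nat \<Rightarrow> real \<Rightarrow> real \<Rightarrow> real" where
  "cov_r1 \<gamma> E t1 t2 = deriv (\<lambda>s. cov_r \<gamma> E s t2) t1"

definition cov_r2 :: "(real \<Rightarrow> real^'d) \<Rightarrow> nat \<Rightarrow> real \<Rightarrow> real \<Rightarrow> real" where
  "cov_r2 \<gamma> E t1 t2 = deriv (\<lambda>s. cov_r \<gamma> E t1 s) t2"

definition cov_r12 :: "(real \<Rightarrow> real^'d) \<Rightarrow> nat \<Rightarrow> real \<Rightarrow> real \<Rightarrow> real" where
  "cov_r12 \<gamma> E t1 t2 = deriv (\<lambda>s. cov_r2 \<gamma> E s t2) t1"

definition gauss_abs_exp :: "real \<Rightarrow> real" where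
  "gauss_abs_exp w = (LINT z|lborel. std_normal_density z * \<bar>sqrt w * z\<bar>)"

text \<open>E[|W1| |W2|] for a centred Gaussian vector (W1,W2) with positive semidefinite covariance
  matrix ((a,b),(b,c)), realised as W1 = p Z1, W2 = q Z1 + s Z2 (Cholesky factor), Z1, Z2 i.i.d. N(0,1).\<close>
definition gauss_abs_prod_exp :: "real \<Rightarrow> real \<Rightarrow> real \<Rightarrow> real" where
  "gauss_abs_prod_exp a b c =
     (let p = sqrt a; q = (if a > 0 then b / sqrt a else 0); s = sqrt (c - q^2) in
      LINT z1|lborel. LINT z2|lborel.
        std_normal_density z1 * std_normal_density z2 * \<bar>p * z1\<bar> * \<bar>q * z1 + s * z2\<bar>)"

text \<open>K1(t) = (2 pi)^(-1/2) E[|f'(t)| | f(t) = 0]. The conditional law of f'(t) given f(t) = 0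
  is (Gaussian regression, Var f(t) = r(t,t)) centred Gaussian with variance
  r12(t,t) - r1(t,t)^2 / r(t,t).\<close>
definition K1 :: "(real \<Rightarrow> real^'d) \<Rightarrow> nat \<Rightarrow> real \<Rightarrow> real" where
  "K1 \<gamma> E t = (1 / sqrt (2 * pi)) *
     gauss_abs_exp (cov_r12 \<gamma> E t t - (cov_r1 \<gamma> E t t)^2 / cov_r \<gamma> E t t)"

text \<open>Conditional covariance of X = (f'(t1), f'(t2)) given Y = (f(t1), f(t2)) = 0:
  Omega = Sxx - Sxy Syy^(-1) Syx, where
  Syy = ((r(t1,t1), r(t1,t2)), (r(t2,t1), r(t2,t2))),
  Sxy = ((r1(t1,t1), r1(t1,t2)), (r1(t2,t1), r1(t2,t2)))  [Cov(f'(s), f(t)) = r1(s,t)],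
  Sxx = ((r12(t1,t1), r12(t1,t2)), (r12(t2,t1), r12(t2,t2))).\<close>
definition cond_cov :: "(real \<Rightarrow> real^'d) \<Rightarrow> nat \<Rightarrow> real \<Rightarrow> real \<Rightarrow> real^2^2" where
  "cond_cov \<gamma> E t1 t2 =
     (let tt = (\<lambda>i::2. if i = 1 then t1 else t2);
          Syy = (\<chi> i j. cov_r \<gamma> E (tt i) (tt j)) :: real^2^2;
          Sxy = (\<chi> i j. cov_r1 \<gamma> E (tt i) (tt j)) :: real^2^2;
          Sxx = (\<chi> i j. cov_r12 \<gamma> E (tt i) (tt j)) :: real^2^2
      in Sxx - Sxy ** matrix_inv Syy ** transpose Sxy)"

definition K2 :: "(real \<Rightarrow> real^'d) \<Rightarrow> nat \<Rightarrow> real \<Rightarrow> real \<Rightarrow> real" where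
  "K2 \<gamma> E t1 t2 =
     (let \<Omega> = cond_cov \<gamma> E t1 t2 in
      (1 / (2 * pi * sqrt (1 - (cov_r \<gamma> E t1 t2)^2))) *
      gauss_abs_prod_exp (\<Omega> $ 1 $ 1) (\<Omega> $ 1 $ 2) (\<Omega> $ 2 $ 2))"

definition sing_set :: "(real \<Rightarrow> real^'d) \<Rightarrow> real \<Rightarrow> nat \<Rightarrow> real \<Rightarrow> (real \<times> real) set" where
  "sing_set \<gamma> L E c0 =
     (let k = nat \<lfloor>L * sqrt (real E) / c0\<rfloor> + 1;
          \<delta>0 = L / real k;
          I = (\<lambda>i::nat. {(real i - 1) * \<delta>0 .. real i * \<delta>0})
      in \<Union>{I i \<times> I j | i j. i \<in> {1..k} \<and> j \<in> {1..k} \<and>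
                 (\<exists>s1\<in>I i. \<exists>s2\<in>I j. \<bar>cov_r \<gamma> E s1 s2\<bar> > 1/2)})"

end

theory Submission
  imports Defs
begin


abbreviation "phi \<equiv> std_normal_density"

lemma phi_nonneg: "0 \<le> phi z" by (simp add: normal_density_nonneg)

lemma phi_le_half: "phi z \<le> 1/2"
proof -
  have "exp (- z\<^sup>2 / 2) \<le> 1" by simp
  moreover have "1 / sqrt (2 * pi) \<le> 1/2"
  proof -
    have "2 \<le> sqrt (2*pi)" using pi_gt3 by (simp add: real_le_rsqrt)
    then show ?thesis by (simp add: field_simps)
  qed
  ultimately have "1 / sqrt (2 * pi) * exp (- z\<^sup>2 / 2) \<le> 1/2 * 1"
    by (intro mult_mono) auto
  then show ?thesis unfolding std_normal_density_def by simp
qed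

lemma phi_even: "phi (-z) = phi z" by (simp add: std_normal_density_def)

lemma int_phi_pow: "integrable lborel (\<lambda>z. phi z * \<bar>z\<bar>^k)"
  by (rule integrable_std_normal_moment_abs)

lemma int_phi: "integrable lborel phi"
  using int_phi_pow[of 0] by simp

lemma int_phi_abs: "integrable lborel (\<lambda>z. phi z * \<bar>z\<bar>)"
  using int_phi_pow[of 1] by simp

lemma integral_phi: "(LINT z|lborel. phi z) = 1"
  using integral_std_normal_moment_even[of 0] by simp

lemma integral_phi_sq: "(LINT z|lborel. phi z * \<bar>z\<bar>^2) = 1"
  using integral_std_normal_moment_even[of 1] by (simp add: power2_abs)

lemma meas_phi[measurable]: "phi \<in> borel_measurable borel"
  by (simp add: std_normal_density_def)

lemma int_lin: "integrable lborel (\<lambda>z. phi z * \<bar>u + s*z\<bar>)"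
proof (rule Bochner_Integration.integrable_bound)
  show "integrable lborel (\<lambda>z. \<bar>u\<bar> * phi z + \<bar>s\<bar> * (phi z * \<bar>z\<bar>))"
    using int_phi int_phi_abs by auto
  show "(\<lambda>z. phi z * \<bar>u + s*z\<bar>) \<in> borel_measurable lborel" by measurable
  show "AE x in lborel. norm (phi x * \<bar>u + s * x\<bar>) \<le> norm (\<bar>u\<bar> * phi x + \<bar>s\<bar> * (phi x * \<bar>x\<bar>))"
  proof (intro AE_I2)
    fix x
    have "phi x * \<bar>u + s * x\<bar> \<le> phi x * (\<bar>u\<bar> + \<bar>s\<bar> * \<bar>x\<bar>)"
      by (intro mult_left_mono phi_nonneg) (metis abs_mult abs_triangle_ineq)
    then show "norm (phi x * \<bar>u + s * x\<bar>) \<le> norm (\<bar>u\<bar> * phi x + \<bar>s\<bar> * (phi x * \<bar>x\<bar>))"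
      using phi_nonneg[of x] by (simp add: algebra_simps abs_mult)
  qed
qed

definition "hh u s = (LINT z|lborel. phi z * \<bar>u + s*z\<bar>)"
definition "mm = (LINT z|lborel. phi z * \<bar>z\<bar>)"
definition "mm3 = (LINT z|lborel. phi z * \<bar>z\<bar>^3)"

lemma mm_nonneg: "0 \<le> mm" unfolding mm_def by (intro integral_nonneg_AE) (simp add: phi_nonneg)
lemma mm3_nonneg: "0 \<le> mm3" unfolding mm3_def by (intro integral_nonneg_AE) (simp add: phi_nonneg)

lemma hh_nonneg: "0 \<le> hh u s" unfolding hh_def by (intro integral_nonneg_AE) (simp add: phi_nonneg)

lemma hh_sym: "(LINT z|lborel. phi z * \<bar>u - s*z\<bar>) = hh u s"
proof -
  have "hh u s = \<bar>-1\<bar> *\<^sub>R (LINT x|lborel. phi (0 + (-1) * x) * \<bar>u + s * (0 + (-1)*x)\<bar>)"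
    unfolding hh_def by (rule lborel_integral_real_affine) simp
  then show ?thesis by (simp add: phi_even)
qed

lemma max_abs_eq: "(\<bar>a + b\<bar> + \<bar>a - b\<bar>) / 2 = max \<bar>a\<bar> \<bar>b::real\<bar>"
  by (auto simp: max_def abs_if)

lemma hh_max: "hh u s = (LINT z|lborel. phi z * max \<bar>u\<bar> \<bar>s*z\<bar>)"
proof -
  have "(LINT z|lborel. phi z * max \<bar>u\<bar> \<bar>s*z\<bar>)
      = (LINT z|lborel. (phi z * \<bar>u + s*z\<bar>) / 2 + (phi z * \<bar>u - s*z\<bar>) / 2)"
    by (intro Bochner_Integration.integral_cong refl) (simp add: max_abs_eq[symmetric] field_simps)
  also have "\<dots> = hh u s / 2 + hh u s / 2"
    using int_lin[of u s] int_lin[of u "-s"] hh_sym[of u s]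
    by (subst Bochner_Integration.integral_add) (auto simp: hh_def)
  finally show ?thesis by simp
qed

lemma int_max: "integrable lborel (\<lambda>z. phi z * max \<bar>u\<bar> \<bar>s*z\<bar>)"
proof -
  have "integrable lborel (\<lambda>z. (phi z * \<bar>u + s*z\<bar>) / 2 + (phi z * \<bar>u + (-s)*z\<bar>) / 2)"
    using int_lin[of u s] int_lin[of u "-s"] by auto
  moreover have "(\<lambda>z. (phi z * \<bar>u + s*z\<bar>) / 2 + (phi z * \<bar>u + (-s)*z\<bar>) / 2) = (\<lambda>z. phi z * max \<bar>u\<bar> \<bar>s*z\<bar>)"
  proof
    fix z
    have "(phi z * \<bar>u + s*z\<bar>) / 2 + (phi z * \<bar>u + (-s)*z\<bar>) / 2 = phi z * ((\<bar>u + s*z\<bar> + \<bar>u - s*z\<bar>) / 2)"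
      by (simp add: field_simps)
    also have "\<dots> = phi z * max \<bar>u\<bar> \<bar>s*z\<bar>" by (simp only: max_abs_eq)
    finally show "(phi z * \<bar>u + s*z\<bar>) / 2 + (phi z * \<bar>u + (-s)*z\<bar>) / 2 = phi z * max \<bar>u\<bar> \<bar>s*z\<bar>" .
  qed
  ultimately show ?thesis by simp
qed

lemma hh_lower: "\<bar>s\<bar> * mm \<le> hh u s"
proof -
  have "\<bar>s\<bar> * mm = (LINT z|lborel. \<bar>s\<bar> * (phi z * \<bar>z\<bar>))" unfolding mm_def by simp
  also have "\<dots> \<le> (LINT z|lborel. phi z * max \<bar>u\<bar> \<bar>s*z\<bar>)"
  proof (intro integral_mono int_max)
    show "integrable lborel (\<lambda>z. \<bar>s\<bar> * (phi z * \<bar>z\<bar>))" using int_phi_abs by simp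
    fix x
    have "phi x * (\<bar>s\<bar> * \<bar>x\<bar>) \<le> phi x * max \<bar>u\<bar> \<bar>s*x\<bar>"
      by (intro mult_left_mono phi_nonneg) (simp add: abs_mult)
    then show "\<bar>s\<bar> * (phi x * \<bar>x\<bar>) \<le> phi x * max \<bar>u\<bar> \<bar>s*x\<bar>" by (simp add: algebra_simps)
  qed
  finally show ?thesis by (simp add: hh_max)
qed

lemma hh_upper0: "hh u s \<le> \<bar>u\<bar> + \<bar>s\<bar> * mm"
proof -
  have "hh u s \<le> (LINT z|lborel. \<bar>u\<bar> * phi z + \<bar>s\<bar> * (phi z * \<bar>z\<bar>))"
    unfolding hh_def
  proof (intro integral_mono int_lin)
    show "integrable lborel (\<lambda>z. \<bar>u\<bar> * phi z + \<bar>s\<bar> * (phi z * \<bar>z\<bar>))"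
      using int_phi int_phi_abs by auto
    fix x
    have "phi x * \<bar>u + s * x\<bar> \<le> phi x * (\<bar>u\<bar> + \<bar>s\<bar> * \<bar>x\<bar>)"
      by (intro mult_left_mono phi_nonneg) (metis abs_mult abs_triangle_ineq)
    then show "phi x * \<bar>u + s * x\<bar> \<le> \<bar>u\<bar> * phi x + \<bar>s\<bar> * (phi x * \<bar>x\<bar>)"
      by (simp add: algebra_simps)
  qed
  also have "\<dots> = \<bar>u\<bar> + \<bar>s\<bar> * mm"
    using int_phi int_phi_abs by (simp add: integral_phi mm_def)
  finally show ?thesis .
qed

lemma hh_upper: assumes "s \<noteq> 0" shows "hh u s \<le> \<bar>s\<bar> * mm + u\<^sup>2 / \<bar>s\<bar>"
proof -
  define t where "t = \<bar>u\<bar> / \<bar>s\<bar>"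
  have t0: "0 \<le> t" by (simp add: t_def)
  have intpi: "integrable lborel (\<lambda>z. indicator {-t<..<t} z *\<^sub>R phi z)"
    by (intro integrable_mult_indicator int_phi) auto
  have intind0: "integrable lborel (indicator {-t<..<t} :: real \<Rightarrow> real)"
    using t0 by (intro integrable_real_indicator) auto
  have intind: "integrable lborel (\<lambda>z. (1/2::real) * indicator {-t<..<t} z)"
    using intind0 by (rule integrable_mult_right)
  have "(LINT z|lborel. indicator {-t<..<t} z *\<^sub>R phi z) \<le> (LINT z|lborel. (1/2::real) * indicator {-t<..<t} z)"
  proof (intro integral_mono intpi intind)
    fix z
    have "indicator {-t<..<t} z * phi z \<le> indicator {-t<..<t} z * (1/2::real)"
      by (intro mult_left_mono phi_le_half) simp
    then show "indicator {-t<..<t} z *\<^sub>R phi z \<le> (1/2::real) * indicator {-t<..<t} z" by simp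
  qed
  also have "\<dots> = (1/2) * measure lborel {-t<..<t}" by simp
  also have "\<dots> = t" using t0 by (simp add: measure_def)
  finally have ind: "(LINT z|lborel. indicator {-t<..<t} z *\<^sub>R phi z) \<le> t" .
  have "hh u s \<le> (LINT z|lborel. \<bar>s\<bar> * (phi z * \<bar>z\<bar>) + \<bar>u\<bar> * (indicator {-t<..<t} z *\<^sub>R phi z))"
    unfolding hh_max
  proof (intro integral_mono int_max)
    show "integrable lborel (\<lambda>z. \<bar>s\<bar> * (phi z * \<bar>z\<bar>) + \<bar>u\<bar> * (indicator {-t<..<t} z *\<^sub>R phi z))"
      by (intro Bochner_Integration.integrable_add integrable_mult_right int_phi_abs intpi)
    fix z
    have "max \<bar>u\<bar> \<bar>s*z\<bar> \<le> \<bar>s\<bar> * \<bar>z\<bar> + \<bar>u\<bar> * indicator {-t<..<t} z"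
    proof (cases "\<bar>s*z\<bar> < \<bar>u\<bar>")
      case True
      then have "\<bar>s\<bar> * \<bar>z\<bar> < \<bar>u\<bar>" by (simp add: abs_mult)
      then have "\<bar>z\<bar> < t" using assms unfolding t_def by (simp add: pos_less_divide_eq mult.commute)
      then have "z \<in> {-t<..<t}" by auto
      then have "indicator {-t<..<t} z = (1::real)" by simp
      then show ?thesis by (simp add: abs_mult)
    next
      case False
      have "0 \<le> \<bar>u\<bar> * indicator {-t<..<t} z" by simp
      then show ?thesis using False by (simp add: abs_mult)
    qed
    then have "phi z * max \<bar>u\<bar> \<bar>s*z\<bar> \<le> phi z * (\<bar>s\<bar> * \<bar>z\<bar> + \<bar>u\<bar> * indicator {-t<..<t} z)"
      by (intro mult_left_mono phi_nonneg)
    moreover have "phi z * (\<bar>s\<bar> * \<bar>z\<bar> + \<bar>u\<bar> * indicator {-t<..<t} z) = \<bar>s\<bar> * (phi z * \<bar>z\<bar>) + \<bar>u\<bar> * (indicator {-t<..<t} z *\<^sub>R phi z)"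
      unfolding real_scaleR_def by (simp only: distrib_left mult.assoc mult.commute mult.left_commute)
    ultimately show "phi z * max \<bar>u\<bar> \<bar>s*z\<bar> \<le> \<bar>s\<bar> * (phi z * \<bar>z\<bar>) + \<bar>u\<bar> * (indicator {-t<..<t} z *\<^sub>R phi z)"
      by (rule ord_le_eq_trans)
  qed
  also have "\<dots> = \<bar>s\<bar> * mm + \<bar>u\<bar> * (LINT z|lborel. indicator {-t<..<t} z *\<^sub>R phi z)"
    using int_phi_abs intpi unfolding mm_def by (subst Bochner_Integration.integral_add) auto
  also have "\<dots> \<le> \<bar>s\<bar> * mm + \<bar>u\<bar> * t"
    by (rule add_left_mono[OF mult_left_mono[OF ind abs_ge_zero]])
  also have "\<dots> = \<bar>s\<bar> * mm + u\<^sup>2 / \<bar>s\<bar>" unfolding t_def by (simp add: power2_eq_square abs_mult_self_eq)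
  finally show ?thesis .
qed


definition "GP p q s = (LINT z1|lborel. LINT z2|lborel.
        phi z1 * phi z2 * \<bar>p * z1\<bar> * \<bar>q * z1 + s * z2\<bar>)"

lemma meas_hh[measurable]: "(\<lambda>z. hh (q*z) s) \<in> borel_measurable lborel"
  unfolding hh_def by measurable

lemma GP_eq: "GP p q s = (LINT z|lborel. (phi z * \<bar>p*z\<bar>) * hh (q*z) s)"
proof -
  have "\<And>z1. (LINT z2|lborel. phi z1 * phi z2 * \<bar>p * z1\<bar> * \<bar>q * z1 + s * z2\<bar>)
     = (phi z1 * \<bar>p*z1\<bar>) * hh (q*z1) s"
  proof -
    fix z1
    have "(LINT z2|lborel. phi z1 * phi z2 * \<bar>p * z1\<bar> * \<bar>q * z1 + s * z2\<bar>)
        = (LINT z2|lborel. (phi z1 * \<bar>p*z1\<bar>) * (phi z2 * \<bar>q * z1 + s * z2\<bar>))"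
      by (intro Bochner_Integration.integral_cong refl) (simp add: mult_ac)
    also have "\<dots> = (phi z1 * \<bar>p*z1\<bar>) * hh (q*z1) s"
      unfolding hh_def by (rule integral_mult_right_zero)
    finally show "?thesis z1" .
  qed
  then show ?thesis unfolding GP_def by simp
qed

lemma hh_int_bound: "\<bar>(phi z * \<bar>p*z\<bar>) * hh (q*z) s\<bar> \<le> \<bar>p\<bar> * \<bar>q\<bar> * (phi z * \<bar>z\<bar>^2) + \<bar>p\<bar> * \<bar>s\<bar> * mm * (phi z * \<bar>z\<bar>)"
proof -
  have h0: "0 \<le> hh (q*z) s" by (rule hh_nonneg)
  have h1: "hh (q*z) s \<le> \<bar>q\<bar> * \<bar>z\<bar> + \<bar>s\<bar> * mm" using hh_upper0[of "q*z" s] by (simp add: abs_mult)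
  have "\<bar>(phi z * \<bar>p*z\<bar>) * hh (q*z) s\<bar> = (phi z * \<bar>p*z\<bar>) * hh (q*z) s"
    using h0 phi_nonneg[of z] by simp
  also have "\<dots> \<le> (phi z * \<bar>p*z\<bar>) * (\<bar>q\<bar> * \<bar>z\<bar> + \<bar>s\<bar> * mm)"
    using h1 phi_nonneg[of z] by (intro mult_left_mono) auto
  also have "\<dots> = \<bar>p\<bar> * \<bar>q\<bar> * (phi z * \<bar>z\<bar>^2) + \<bar>p\<bar> * \<bar>s\<bar> * mm * (phi z * \<bar>z\<bar>)"
    by (simp add: abs_mult power2_eq_square algebra_simps)
  finally show ?thesis .
qed

lemma int_GP: "integrable lborel (\<lambda>z. (phi z * \<bar>p*z\<bar>) * hh (q*z) s)"
proof (rule Bochner_Integration.integrable_bound)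
  show "integrable lborel (\<lambda>z. \<bar>p\<bar> * \<bar>q\<bar> * (phi z * \<bar>z\<bar>^2) + \<bar>p\<bar> * \<bar>s\<bar> * mm * (phi z * \<bar>z\<bar>))"
    by (intro Bochner_Integration.integrable_add integrable_mult_right int_phi_abs int_phi_pow)
  show "(\<lambda>z. (phi z * \<bar>p*z\<bar>) * hh (q*z) s) \<in> borel_measurable lborel" by measurable
  show "AE x in lborel. norm ((phi x * \<bar>p*x\<bar>) * hh (q*x) s) \<le> norm (\<bar>p\<bar> * \<bar>q\<bar> * (phi x * \<bar>x\<bar>^2) + \<bar>p\<bar> * \<bar>s\<bar> * mm * (phi x * \<bar>x\<bar>))"
  proof (rule AE_I2)
    fix x
    have "0 \<le> \<bar>p\<bar> * \<bar>q\<bar> * (phi x * \<bar>x\<bar>^2) + \<bar>p\<bar> * \<bar>s\<bar> * mm * (phi x * \<bar>x\<bar>)"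
      using phi_nonneg[of x] mm_nonneg by simp
    then show "norm ((phi x * \<bar>p*x\<bar>) * hh (q*x) s) \<le> norm (\<bar>p\<bar> * \<bar>q\<bar> * (phi x * \<bar>x\<bar>^2) + \<bar>p\<bar> * \<bar>s\<bar> * mm * (phi x * \<bar>x\<bar>))"
      using hh_int_bound[of x p q s] by simp
  qed
qed

lemma GP_abs: "\<bar>GP p q s\<bar> \<le> \<bar>p\<bar> * \<bar>q\<bar> + \<bar>p\<bar> * \<bar>s\<bar> * mm * mm"
proof -
  have "\<bar>GP p q s\<bar> \<le> (LINT z|lborel. \<bar>p\<bar> * \<bar>q\<bar> * (phi z * \<bar>z\<bar>^2) + \<bar>p\<bar> * \<bar>s\<bar> * mm * (phi z * \<bar>z\<bar>))"
    unfolding GP_eq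
  proof (rule integral_abs_bound_integral[OF int_GP])
    show "integrable lborel (\<lambda>z. \<bar>p\<bar> * \<bar>q\<bar> * (phi z * \<bar>z\<bar>^2) + \<bar>p\<bar> * \<bar>s\<bar> * mm * (phi z * \<bar>z\<bar>))"
      by (intro Bochner_Integration.integrable_add integrable_mult_right int_phi_abs int_phi_pow)
    show "\<And>x. x \<in> space lborel \<Longrightarrow> \<bar>(phi x * \<bar>p*x\<bar>) * hh (q*x) s\<bar> \<le> \<bar>p\<bar> * \<bar>q\<bar> * (phi x * \<bar>x\<bar>^2) + \<bar>p\<bar> * \<bar>s\<bar> * mm * (phi x * \<bar>x\<bar>)"
      by (rule hh_int_bound)
  qed
  also have "\<dots> = \<bar>p\<bar> * \<bar>q\<bar> * (LINT z|lborel. phi z * \<bar>z\<bar>^2) + \<bar>p\<bar> * \<bar>s\<bar> * mm * (LINT z|lborel. phi z * \<bar>z\<bar>)"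
    by (simp only: Bochner_Integration.integral_add[OF integrable_mult_right[OF int_phi_pow] integrable_mult_right[OF int_phi_abs]] integral_mult_right_zero)
  also have "\<dots> = \<bar>p\<bar> * \<bar>q\<bar> + \<bar>p\<bar> * \<bar>s\<bar> * mm * mm"
    by (simp only: integral_phi_sq mm_def[symmetric] mult_1_right)
  finally show ?thesis .
qed

lemma GP_lower: assumes "0 \<le> p" shows "p * \<bar>s\<bar> * mm * mm \<le> GP p q s"
proof -
  have "p * \<bar>s\<bar> * mm * mm = (LINT z|lborel. (p * \<bar>s\<bar> * mm) * (phi z * \<bar>z\<bar>))"
    by (simp add: mm_def)
  also have "\<dots> \<le> (LINT z|lborel. (phi z * \<bar>p*z\<bar>) * hh (q*z) s)"
  proof (rule integral_mono[OF _ int_GP])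
    show "integrable lborel (\<lambda>z. (p * \<bar>s\<bar> * mm) * (phi z * \<bar>z\<bar>))"
      by (intro integrable_mult_right int_phi_abs)
    fix z
    have "(phi z * \<bar>p*z\<bar>) * (\<bar>s\<bar> * mm) \<le> (phi z * \<bar>p*z\<bar>) * hh (q*z) s"
      using hh_lower[of s "q*z"] phi_nonneg[of z] by (intro mult_left_mono) auto
    then show "(p * \<bar>s\<bar> * mm) * (phi z * \<bar>z\<bar>) \<le> (phi z * \<bar>p*z\<bar>) * hh (q*z) s"
      using assms by (simp add: abs_mult mult_ac)
  qed
  finally show ?thesis unfolding GP_eq .
qed

lemma GP_upper: assumes "0 \<le> p" "s \<noteq> 0"
  shows "GP p q s \<le> p * \<bar>s\<bar> * mm * mm + p * q\<^sup>2 / \<bar>s\<bar> * mm3"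
proof -
  have "GP p q s \<le> (LINT z|lborel. (p * \<bar>s\<bar> * mm) * (phi z * \<bar>z\<bar>) + (p * q\<^sup>2 / \<bar>s\<bar>) * (phi z * \<bar>z\<bar>^3))"
    unfolding GP_eq
  proof (rule integral_mono[OF int_GP])
    show "integrable lborel (\<lambda>z. (p * \<bar>s\<bar> * mm) * (phi z * \<bar>z\<bar>) + (p * q\<^sup>2 / \<bar>s\<bar>) * (phi z * \<bar>z\<bar>^3))"
      by (intro Bochner_Integration.integrable_add integrable_mult_right int_phi_abs int_phi_pow)
    fix z
    have "(phi z * \<bar>p*z\<bar>) * hh (q*z) s \<le> (phi z * \<bar>p*z\<bar>) * (\<bar>s\<bar> * mm + (q*z)\<^sup>2 / \<bar>s\<bar>)"
      using hh_upper[OF assms(2), of "q*z"] phi_nonneg[of z] by (intro mult_left_mono) auto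
    also have "\<dots> = (p * \<bar>s\<bar> * mm) * (phi z * \<bar>z\<bar>) + (p * q\<^sup>2 / \<bar>s\<bar>) * (phi z * \<bar>z\<bar>^3)"
      using assms(1) by (simp add: abs_mult power2_eq_square power3_eq_cube abs_mult_self_eq field_simps)
    finally show "(phi z * \<bar>p*z\<bar>) * hh (q*z) s \<le> (p * \<bar>s\<bar> * mm) * (phi z * \<bar>z\<bar>) + (p * q\<^sup>2 / \<bar>s\<bar>) * (phi z * \<bar>z\<bar>^3)" .
  qed
  also have "\<dots> = (p * \<bar>s\<bar> * mm) * (LINT z|lborel. phi z * \<bar>z\<bar>) + (p * q\<^sup>2 / \<bar>s\<bar>) * (LINT z|lborel. phi z * \<bar>z\<bar>^3)"
    by (subst Bochner_Integration.integral_add) (auto intro!: integrable_mult_right int_phi_abs int_phi_pow)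
  also have "\<dots> = p * \<bar>s\<bar> * mm * mm + p * q\<^sup>2 / \<bar>s\<bar> * mm3"
    by (simp only: mm_def[symmetric] mm3_def[symmetric])
  finally show ?thesis .
qed


definition vv :: "int^'d \<Rightarrow> real^'d" where "vv \<mu> = (\<chi> i. real_of_int (\<mu>$i))"

lemma lat_inner_vv: "lat_inner \<mu> x = vv \<mu> \<bullet> x"
  unfolding lat_inner_def vv_def inner_vec_def by simp

lemma finite_lattice_pts: "finite (lattice_pts E :: (int^'d) set)"
proof -
  let ?A = "{-int E..int E}"
  have "lattice_pts E \<subseteq> vec_lambda ` (\<Pi>\<^sub>E i\<in>(UNIV::'d set). ?A)"
  proof
    fix \<mu> :: "int^'d" assume "\<mu> \<in> lattice_pts E"
    then have s: "(\<Sum>i\<in>UNIV. (\<mu> $ i)^2) = int E" by (simp add: lattice_pts_def)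
    have "\<mu> $ i \<in> ?A" for i
    proof -
      have "(\<mu> $ i)^2 \<le> (\<Sum>i\<in>UNIV. (\<mu> $ i)^2)"
        by (rule member_le_sum) auto
      moreover have "\<bar>\<mu> $ i\<bar> \<le> (\<mu> $ i)^2"
      proof (cases "\<mu> $ i = 0")
        case False
        then have "1 \<le> \<bar>\<mu> $ i\<bar>" by linarith
        then have "\<bar>\<mu> $ i\<bar> * 1 \<le> \<bar>\<mu> $ i\<bar> * \<bar>\<mu> $ i\<bar>" by (intro mult_left_mono) auto
        then show ?thesis by (simp add: power2_eq_square abs_mult_self_eq)
      qed simp
      ultimately show ?thesis using s by auto
    qed
    then have "vec_nth \<mu> \<in> (\<Pi>\<^sub>E i\<in>(UNIV::'d set). ?A)" by auto
    moreover have "\<mu> = vec_lambda (vec_nth \<mu>)" by simp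
    ultimately show "\<mu> \<in> vec_lambda ` (\<Pi>\<^sub>E i\<in>(UNIV::'d set). ?A)" by blast
  qed
  moreover have "finite (vec_lambda ` (\<Pi>\<^sub>E i\<in>(UNIV::'d set). ?A))"
    by (intro finite_imageI finite_PiE) auto
  ultimately show ?thesis by (rule finite_subset)
qed

definition fl :: "'d \<Rightarrow> int^'d \<Rightarrow> int^'d" where
  "fl i \<mu> = (\<chi> k. if k = i then - \<mu>$k else \<mu>$k)"

definition swp :: "'d \<Rightarrow> 'd \<Rightarrow> 'd \<Rightarrow> 'd" where
  "swp i j k = (if k = i then j else if k = j then i else k)"

definition sw :: "'d \<Rightarrow> 'd \<Rightarrow> int^'d \<Rightarrow> int^'d" where
  "sw i j \<mu> = (\<chi> k. \<mu> $ swp i j k)"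

lemma swp_swp: "swp i j (swp i j k) = k" by (auto simp: swp_def)

lemma sum_swp: "(\<Sum>k\<in>UNIV. f (swp i j k)) = (\<Sum>k\<in>UNIV. (f k :: 'a::comm_monoid_add))"
  by (rule sum.reindex_bij_witness[where i="swp i j" and j="swp i j"]) (auto simp: swp_swp)

lemma fl_fl: "fl i (fl i \<mu>) = \<mu>" by (simp add: fl_def vec_eq_iff)

lemma sw_sw: "sw i j (sw i j \<mu>) = \<mu>" by (simp add: sw_def vec_eq_iff swp_swp)

lemma fl_in: assumes "\<mu> \<in> lattice_pts E" shows "fl i \<mu> \<in> lattice_pts E"
proof -
  have "(\<Sum>k\<in>UNIV. (fl i \<mu> $ k)^2) = (\<Sum>k\<in>UNIV. (\<mu> $ k)^2)"
    by (intro sum.cong refl) (simp add: fl_def)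
  then show ?thesis using assms by (simp add: lattice_pts_def)
qed

lemma sw_in: assumes "\<mu> \<in> lattice_pts E" shows "sw i j \<mu> \<in> lattice_pts E"
proof -
  have "(\<Sum>k\<in>UNIV. (sw i j \<mu> $ k)^2) = (\<Sum>k\<in>UNIV. (\<mu> $ swp i j k)^2)"
    by (simp add: sw_def)
  also have "\<dots> = (\<Sum>k\<in>UNIV. (\<mu> $ k)^2)" by (rule sum_swp[where f="\<lambda>k. (\<mu> $ k)^2"])
  finally show ?thesis using assms by (simp add: lattice_pts_def)
qed

lemma sum_fl: "(\<Sum>\<mu>\<in>lattice_pts E. f (fl i \<mu>)) = (\<Sum>\<mu>\<in>lattice_pts E. (f \<mu> :: real))"
  by (rule sum.reindex_bij_witness[where i="fl i" and j="fl i"]) (auto simp: fl_fl fl_in)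

lemma sum_sw: "(\<Sum>\<mu>\<in>lattice_pts E. f (sw i j \<mu>)) = (\<Sum>\<mu>\<in>lattice_pts E. (f \<mu> :: real))"
  by (rule sum.reindex_bij_witness[where i="sw i j" and j="sw i j"]) (auto simp: sw_sw sw_in)

lemma offdiag: fixes i j :: "'d::finite" assumes "i \<noteq> j"
  shows "(\<Sum>\<mu>\<in>(lattice_pts E :: (int^'d) set). real_of_int (\<mu>$i) * real_of_int (\<mu>$j)) = 0"
proof -
  let ?f = "\<lambda>\<mu>::int^'d. real_of_int (\<mu>$i) * real_of_int (\<mu>$j)"
  have "(\<Sum>\<mu>\<in>lattice_pts E. ?f \<mu>) = (\<Sum>\<mu>\<in>lattice_pts E. ?f (fl i \<mu>))"
    by (rule sum_fl[symmetric])
  also have "\<dots> = (\<Sum>\<mu>\<in>lattice_pts E. - ?f \<mu>)"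
    using assms by (intro sum.cong refl) (simp add: fl_def)
  also have "\<dots> = - (\<Sum>\<mu>\<in>lattice_pts E. ?f \<mu>)" by (simp add: sum_negf)
  finally show ?thesis by simp
qed

lemma diag_eq: fixes i j :: "'d::finite" shows "(\<Sum>\<mu>\<in>(lattice_pts E :: (int^'d) set). (real_of_int (\<mu>$i))^2) = (\<Sum>\<mu>\<in>(lattice_pts E :: (int^'d) set). (real_of_int (\<mu>$j))^2)"
proof -
  have "(\<Sum>\<mu>\<in>(lattice_pts E :: (int^'d) set). (real_of_int (\<mu>$i))^2) = (\<Sum>\<mu>\<in>(lattice_pts E :: (int^'d) set). (real_of_int (sw i j \<mu> $ i))^2)"
    by (rule sum_sw[symmetric])
  also have "\<dots> = (\<Sum>\<mu>\<in>(lattice_pts E :: (int^'d) set). (real_of_int (\<mu>$j))^2)"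
    by (simp add: sw_def swp_def)
  finally show ?thesis .
qed

lemma diag_val: fixes i :: "'d::finite" shows "(\<Sum>\<mu>\<in>(lattice_pts E :: (int^'d) set). (real_of_int (\<mu>$i))^2)
   = real (card (lattice_pts E :: (int^'d) set)) * real E / real CARD('d)"
proof -
  let ?P = "lattice_pts E :: (int^'d) set"
  let ?c = "(\<Sum>\<mu>\<in>?P. (real_of_int (\<mu>$i))^2)"
  have "(\<Sum>j\<in>(UNIV::'d set). (\<Sum>\<mu>\<in>?P. (real_of_int (\<mu>$j))^2)) = real CARD('d) * ?c"
  proof -
    have "(\<Sum>j\<in>(UNIV::'d set). (\<Sum>\<mu>\<in>?P. (real_of_int (\<mu>$j))^2)) = (\<Sum>j\<in>(UNIV::'d set). ?c)"
      by (rule sum.cong[OF refl]) (rule diag_eq)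
    then show ?thesis by simp
  qed
  moreover have "(\<Sum>j\<in>(UNIV::'d set). (\<Sum>\<mu>\<in>?P. (real_of_int (\<mu>$j))^2))
      = (\<Sum>\<mu>\<in>?P. (\<Sum>j\<in>UNIV. (real_of_int (\<mu>$j))^2))"
    by (rule sum.swap)
  moreover have "\<dots> = (\<Sum>\<mu>\<in>?P. real E)"
  proof (intro sum.cong refl)
    fix \<mu> assume "\<mu> \<in> ?P"
    then have "(\<Sum>j\<in>UNIV. (\<mu> $ j)^2) = int E" by (simp add: lattice_pts_def)
    then have "real_of_int (\<Sum>j\<in>UNIV. (\<mu> $ j)^2) = real E" by simp
    then show "(\<Sum>j\<in>UNIV. (real_of_int (\<mu>$j))^2) = real E" by simp
  qed
  ultimately have "real CARD('d) * ?c = real (card ?P) * real E" by simp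
  then show ?thesis by (simp add: field_simps)
qed

lemma lattice_sum_sq:
  "(\<Sum>\<mu>\<in>(lattice_pts E :: (int^'d) set). (vv \<mu> \<bullet> w)^2)
     = real (card (lattice_pts E :: (int^'d) set)) * real E / real CARD('d) * (w \<bullet> w)"
proof -
  let ?P = "lattice_pts E :: (int^'d) set"
  let ?c = "real (card ?P) * real E / real CARD('d)"
  have "(\<Sum>\<mu>\<in>?P. (vv \<mu> \<bullet> w)^2)
      = (\<Sum>\<mu>\<in>?P. \<Sum>i\<in>UNIV. \<Sum>j\<in>UNIV. (w$i * w$j) * (real_of_int (\<mu>$i) * real_of_int (\<mu>$j)))"
    by (intro sum.cong refl)
       (simp add: vv_def inner_vec_def power2_eq_square sum_product mult_ac)
  also have "\<dots> = (\<Sum>i\<in>UNIV. \<Sum>j\<in>UNIV. (w$i * w$j) * (\<Sum>\<mu>\<in>?P. real_of_int (\<mu>$i) * real_of_int (\<mu>$j)))"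
    by (simp add: sum.swap[of _ ?P] sum_distrib_left)
  also have "\<dots> = (\<Sum>i\<in>UNIV. \<Sum>j\<in>UNIV. if j = i then (w$i * w$i) * ?c else 0)"
  proof (intro sum.cong refl)
    fix i j :: 'd
    show "(w$i * w$j) * (\<Sum>\<mu>\<in>?P. real_of_int (\<mu>$i) * real_of_int (\<mu>$j)) = (if j = i then (w$i * w$i) * ?c else 0)"
    proof (cases "j = i")
      case True
      then show ?thesis using diag_val[where E=E and i=i] by (simp add: power2_eq_square)
    next
      case False
      then show ?thesis using offdiag[where E=E and i=i and j=j] by simp
    qed
  qed
  also have "\<dots> = (\<Sum>i\<in>UNIV. (w$i * w$i) * ?c)" by simp
  also have "\<dots> = ?c * (w \<bullet> w)" by (simp add: inner_vec_def sum_distrib_left sum_divide_distrib mult_ac)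
  finally show ?thesis .
qed

lemma norm_vv: assumes "\<mu> \<in> lattice_pts E" shows "norm (vv \<mu>) = sqrt (real E)"
proof -
  have "(\<Sum>i\<in>UNIV. (\<mu> $ i)^2) = int E" using assms by (simp add: lattice_pts_def)
  then have "(\<Sum>i\<in>UNIV. (real_of_int (\<mu> $ i))^2) = real E"
    by (metis (mono_tags, lifting) of_int_of_nat_eq of_int_power of_int_sum sum.cong)
  then show ?thesis by (simp add: norm_vec_def L2_set_def vv_def)
qed


definition NN :: "(real \<Rightarrow> real^'d) \<Rightarrow> nat \<Rightarrow> real" where
  "NN \<gamma> E = real (card (lattice_pts E :: (int^'d) set))"

definition ph :: "(real \<Rightarrow> real^'d) \<Rightarrow> int^'d \<Rightarrow> real \<Rightarrow> real \<Rightarrow> real" where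
  "ph \<gamma> \<mu> s t = 2*pi*(vv \<mu> \<bullet> (\<gamma> s - \<gamma> t))"

definition R1 :: "(real \<Rightarrow> real^'d) \<Rightarrow> (real \<Rightarrow> real^'d) \<Rightarrow> nat \<Rightarrow> real \<Rightarrow> real \<Rightarrow> real" where
  "R1 \<gamma> g E s t = (1 / NN \<gamma> E) * (\<Sum>\<mu>\<in>(lattice_pts E :: (int^'d) set). - sin (ph \<gamma> \<mu> s t) * (2*pi*(vv \<mu> \<bullet> g s)))"

definition R2 :: "(real \<Rightarrow> real^'d) \<Rightarrow> (real \<Rightarrow> real^'d) \<Rightarrow> nat \<Rightarrow> real \<Rightarrow> real \<Rightarrow> real" where
  "R2 \<gamma> g E s t = (1 / NN \<gamma> E) * (\<Sum>\<mu>\<in>(lattice_pts E :: (int^'d) set). sin (ph \<gamma> \<mu> s t) * (2*pi*(vv \<mu> \<bullet> g t)))"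

definition R12 :: "(real \<Rightarrow> real^'d) \<Rightarrow> (real \<Rightarrow> real^'d) \<Rightarrow> nat \<Rightarrow> real \<Rightarrow> real \<Rightarrow> real" where
  "R12 \<gamma> g E s t = (1 / NN \<gamma> E) * (\<Sum>\<mu>\<in>(lattice_pts E :: (int^'d) set).
      cos (ph \<gamma> \<mu> s t) * (2*pi*(vv \<mu> \<bullet> g s)) * (2*pi*(vv \<mu> \<bullet> g t)))"

lemma cov_r_eq: "cov_r \<gamma> E s t = (1 / NN \<gamma> E) * (\<Sum>\<mu>\<in>(lattice_pts E :: (int^'d) set). cos (ph \<gamma> \<mu> s t))"
  unfolding cov_r_def NN_def ph_def lat_inner_vv by simp

lemma D_inner:
  assumes "(\<gamma> has_vector_derivative g) (at t)"
  shows "((\<lambda>s. v \<bullet> \<gamma> s) has_real_derivative (v \<bullet> g)) (at t)"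
proof -
  have "(\<gamma> has_derivative (\<lambda>x. x *\<^sub>R g)) (at t)"
    using assms by (simp add: has_vector_derivative_def)
  then have "((\<lambda>s. v \<bullet> \<gamma> s) has_derivative (\<lambda>x. v \<bullet> (x *\<^sub>R g))) (at t)"
    by (rule has_derivative_inner_right)
  then show ?thesis
    by (simp add: has_real_derivative_iff_has_vector_derivative has_vector_derivative_def)
qed

lemma D_ph1:
  assumes "(\<gamma> has_vector_derivative g) (at s)"
  shows "((\<lambda>s. ph \<gamma> \<mu> s t) has_real_derivative (2*pi*(vv \<mu> \<bullet> g))) (at s)"
proof -
  have "((\<lambda>s. 2*pi*(vv \<mu> \<bullet> \<gamma> s - vv \<mu> \<bullet> \<gamma> t)) has_real_derivative (2*pi*(vv \<mu> \<bullet> g - 0))) (at s)"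
    by (intro DERIV_cmult DERIV_diff D_inner assms DERIV_const)
  then show ?thesis by (simp add: ph_def inner_diff_right)
qed

lemma D_ph2:
  assumes "(\<gamma> has_vector_derivative g) (at t)"
  shows "((\<lambda>t. ph \<gamma> \<mu> s t) has_real_derivative (- 2*pi*(vv \<mu> \<bullet> g))) (at t)"
proof -
  have "((\<lambda>t. 2*pi*(vv \<mu> \<bullet> \<gamma> s - vv \<mu> \<bullet> \<gamma> t)) has_real_derivative (2*pi*(0 - vv \<mu> \<bullet> g))) (at t)"
    by (intro DERIV_cmult DERIV_diff D_inner assms DERIV_const)
  then show ?thesis by (simp add: ph_def inner_diff_right)
qed

lemma D_r1:
  fixes \<gamma> g :: "real \<Rightarrow> real^'d"
  assumes "(\<gamma> has_vector_derivative g s) (at s)"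
  shows "((\<lambda>s. cov_r \<gamma> E s t) has_real_derivative R1 \<gamma> g E s t) (at s)"
proof -
  have "((\<lambda>s. (1 / NN \<gamma> E) * (\<Sum>\<mu>\<in>(lattice_pts E :: (int^'d) set). cos (ph \<gamma> \<mu> s t))) has_real_derivative
     (1 / NN \<gamma> E) * (\<Sum>\<mu>\<in>(lattice_pts E :: (int^'d) set). - sin (ph \<gamma> \<mu> s t) * (2*pi*(vv \<mu> \<bullet> g s)))) (at s)"
    by (intro DERIV_cmult DERIV_sum DERIV_cos[THEN DERIV_chain2] D_ph1 assms)
  then show ?thesis unfolding cov_r_eq R1_def .
qed

lemma D_r2:
  fixes \<gamma> g :: "real \<Rightarrow> real^'d"
  assumes "(\<gamma> has_vector_derivative g t) (at t)"
  shows "((\<lambda>t. cov_r \<gamma> E s t) has_real_derivative R2 \<gamma> g E s t) (at t)"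
proof -
  have "((\<lambda>t. (1 / NN \<gamma> E) * (\<Sum>\<mu>\<in>(lattice_pts E :: (int^'d) set). cos (ph \<gamma> \<mu> s t))) has_real_derivative
     (1 / NN \<gamma> E) * (\<Sum>\<mu>\<in>(lattice_pts E :: (int^'d) set). - sin (ph \<gamma> \<mu> s t) * (- 2*pi*(vv \<mu> \<bullet> g t)))) (at t)"
    by (intro DERIV_cmult DERIV_sum DERIV_cos[THEN DERIV_chain2] D_ph2 assms)
  then show ?thesis unfolding cov_r_eq R2_def by simp
qed

lemma D_R2:
  fixes \<gamma> g :: "real \<Rightarrow> real^'d"
  assumes "(\<gamma> has_vector_derivative g s) (at s)"
  shows "((\<lambda>s. R2 \<gamma> g E s t) has_real_derivative R12 \<gamma> g E s t) (at s)"
proof -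
  have "((\<lambda>s. (1 / NN \<gamma> E) * (\<Sum>\<mu>\<in>(lattice_pts E :: (int^'d) set). sin (ph \<gamma> \<mu> s t) * (2*pi*(vv \<mu> \<bullet> g t)))) has_real_derivative
     (1 / NN \<gamma> E) * (\<Sum>\<mu>\<in>(lattice_pts E :: (int^'d) set). (cos (ph \<gamma> \<mu> s t) * (2*pi*(vv \<mu> \<bullet> g s))) * (2*pi*(vv \<mu> \<bullet> g t)))) (at s)"
    by (intro DERIV_cmult DERIV_sum DERIV_cmult_right DERIV_sin[THEN DERIV_chain2] D_ph1 assms)
  then show ?thesis unfolding R2_def R12_def .
qed

locale curve =
  fixes \<gamma> :: "real \<Rightarrow> real^'d" and g :: "real \<Rightarrow> real^'d" and S :: "real set"
  assumes S_open: "open S"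
    and deriv: "\<And>t. t \<in> S \<Longrightarrow> (\<gamma> has_vector_derivative g t) (at t)"
begin

lemma r1_eq: "s \<in> S \<Longrightarrow> cov_r1 \<gamma> E s t = R1 \<gamma> g E s t"
  unfolding cov_r1_def by (rule DERIV_imp_deriv[OF D_r1[where \<gamma>=\<gamma> and g=g, OF deriv]])

lemma r2_eq: "t \<in> S \<Longrightarrow> cov_r2 \<gamma> E s t = R2 \<gamma> g E s t"
  unfolding cov_r2_def by (rule DERIV_imp_deriv[OF D_r2[where \<gamma>=\<gamma> and g=g, OF deriv]])

lemma r12_eq: assumes "s \<in> S" "t \<in> S" shows "cov_r12 \<gamma> E s t = R12 \<gamma> g E s t"
proof -
  have "(\<lambda>s'. cov_r2 \<gamma> E s' t) = (\<lambda>s'. R2 \<gamma> g E s' t)"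
    using r2_eq[OF assms(2)] by auto
  then show ?thesis unfolding cov_r12_def
    using DERIV_imp_deriv[OF D_R2[where \<gamma>=\<gamma> and g=g and E=E and t=t, OF deriv[OF assms(1)]]] by simp
qed

end


lemma avg_abs:
  fixes f :: "'a \<Rightarrow> real"
  assumes "finite A" "A \<noteq> {}" "\<And>x. x \<in> A \<Longrightarrow> \<bar>f x\<bar> \<le> B"
  shows "\<bar>(1 / real (card A)) * (\<Sum>x\<in>A. f x)\<bar> \<le> B"
proof -
  have c: "0 < real (card A)" using assms by (simp add: card_gt_0_iff)
  have "\<bar>\<Sum>x\<in>A. f x\<bar> \<le> (\<Sum>x\<in>A. \<bar>f x\<bar>)" by (rule sum_abs)
  also have "\<dots> \<le> (\<Sum>x\<in>A. B)" using assms(3) by (rule sum_mono)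
  also have "\<dots> = real (card A) * B" by simp
  finally have "\<bar>\<Sum>x\<in>A. f x\<bar> \<le> real (card A) * B" .
  then show ?thesis using c by (simp add: abs_mult field_simps)
qed

lemma vv_g_bound:
  fixes w :: "real^'d"
  assumes "\<mu> \<in> lattice_pts E" "norm w = 1"
  shows "\<bar>vv \<mu> \<bullet> w\<bar> \<le> sqrt (real E)"
  using Cauchy_Schwarz_ineq2[of "vv \<mu>" w] norm_vv[OF assms(1)] assms(2) by simp

context
  fixes \<gamma> g :: "real \<Rightarrow> real^'d" and E :: nat
  assumes ne: "(lattice_pts E :: (int^'d) set) \<noteq> {}"
begin

lemma NN_pos: "0 < NN \<gamma> E"
  using ne finite_lattice_pts by (simp add: NN_def card_gt_0_iff)

lemma B_r: "\<bar>cov_r \<gamma> E s t\<bar> \<le> 1"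
  unfolding cov_r_eq NN_def by (rule avg_abs[OF finite_lattice_pts ne]) simp

lemma B_R1: assumes "norm (g s) = 1" shows "\<bar>R1 \<gamma> g E s t\<bar> \<le> 2*pi* sqrt (real E)"
  unfolding R1_def NN_def
proof (rule avg_abs[OF finite_lattice_pts ne])
  fix \<mu> :: "int^'d" assume m: "\<mu> \<in> lattice_pts E"
  have "\<bar>- sin (ph \<gamma> \<mu> s t) * (2*pi*(vv \<mu> \<bullet> g s))\<bar> = \<bar>sin (ph \<gamma> \<mu> s t)\<bar> * (2*pi*\<bar>vv \<mu> \<bullet> g s\<bar>)"
    by (simp add: abs_mult)
  also have "\<dots> \<le> 1 * (2*pi* sqrt (real E))"
    using vv_g_bound[OF m assms] by (intro mult_mono) auto
  finally show "\<bar>- sin (ph \<gamma> \<mu> s t) * (2*pi*(vv \<mu> \<bullet> g s))\<bar> \<le> 2*pi* sqrt (real E)" by simp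
qed

lemma B_R12: assumes "norm (g s) = 1" "norm (g t) = 1" shows "\<bar>R12 \<gamma> g E s t\<bar> \<le> 4*pi^2*real E"
  unfolding R12_def NN_def
proof (rule avg_abs[OF finite_lattice_pts ne])
  fix \<mu> :: "int^'d" assume m: "\<mu> \<in> lattice_pts E"
  have "\<bar>cos (ph \<gamma> \<mu> s t) * (2*pi*(vv \<mu> \<bullet> g s)) * (2*pi*(vv \<mu> \<bullet> g t))\<bar>
      = \<bar>cos (ph \<gamma> \<mu> s t)\<bar> * (2*pi*\<bar>vv \<mu> \<bullet> g s\<bar>) * (2*pi*\<bar>vv \<mu> \<bullet> g t\<bar>)"
    by (simp add: abs_mult)
  also have "\<dots> \<le> 1 * (2*pi* sqrt (real E)) * (2*pi* sqrt (real E))"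
    using vv_g_bound[OF m assms(1)] vv_g_bound[OF m assms(2)] by (intro mult_mono) auto
  also have "\<dots> = 4*pi^2*real E" by (simp add: power2_eq_square)
  finally show "\<bar>cos (ph \<gamma> \<mu> s t) * (2*pi*(vv \<mu> \<bullet> g s)) * (2*pi*(vv \<mu> \<bullet> g t))\<bar> \<le> 4*pi^2*real E" .
qed

lemma ph_swap: "ph \<gamma> \<mu> t s = - ph \<gamma> \<mu> s t"
  unfolding ph_def by (simp add: inner_diff_right algebra_simps)

lemma sym_r: "cov_r \<gamma> E t s = cov_r \<gamma> E s t"
  unfolding cov_r_eq by (simp add: ph_swap[where t=t and s=s])

lemma sym_R1: "R1 \<gamma> g E t s = R2 \<gamma> g E s t"
  unfolding R1_def R2_def by (simp add: ph_swap[where t=t and s=s])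

lemma sym_R12: "R12 \<gamma> g E t s = R12 \<gamma> g E s t"
  unfolding R12_def by (simp add: ph_swap[where t=t and s=s] mult_ac)

lemma diag_r: "cov_r \<gamma> E t t = 1"
  using NN_pos unfolding cov_r_eq by (simp add: ph_def NN_def)

lemma diag_R1: "R1 \<gamma> g E t t = 0"
  unfolding R1_def by (simp add: ph_def)

lemma diag_R12: assumes "norm (g t) = 1"
  shows "R12 \<gamma> g E t t = 4*pi^2*real E / real CARD('d)"
proof -
  have gg: "g t \<bullet> g t = 1" using assms by (simp add: power2_norm_eq_inner[symmetric])
  have "R12 \<gamma> g E t t = (1 / NN \<gamma> E) * (4*pi^2 * (\<Sum>\<mu>\<in>(lattice_pts E :: (int^'d) set). (vv \<mu> \<bullet> g t)^2))"
    unfolding R12_def by (simp add: ph_def sum_distrib_left power2_eq_square mult_ac)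
  also have "\<dots> = (1 / NN \<gamma> E) * (4*pi^2 * (NN \<gamma> E * real E / real CARD('d) * (g t \<bullet> g t)))"
    by (simp only: lattice_sum_sq NN_def)
  also have "\<dots> = 4*pi^2*real E / real CARD('d)"
    unfolding gg using NN_pos by (simp add: field_simps)
  finally show ?thesis .
qed

end


lemma two_ne: "(2::2) \<noteq> 1" by simp

lemma mat_schur:
  fixes Syy Sxy Sxx :: "real^2^2"
  assumes y: "Syy$1$1 = 1" "Syy$1$2 = \<rho>" "Syy$2$1 = \<rho>" "Syy$2$2 = 1" and r: "\<rho>^2 \<noteq> 1"
    and x: "Sxy$1$1 = 0" "Sxy$1$2 = \<alpha>" "Sxy$2$1 = \<beta>" "Sxy$2$2 = 0"
  shows "(Sxx - Sxy ** matrix_inv Syy ** transpose Sxy)$1$1 = Sxx$1$1 - \<alpha>^2/(1-\<rho>^2)"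
    and "(Sxx - Sxy ** matrix_inv Syy ** transpose Sxy)$1$2 = Sxx$1$2 + \<rho>*\<alpha>*\<beta>/(1-\<rho>^2)"
    and "(Sxx - Sxy ** matrix_inv Syy ** transpose Sxy)$2$2 = Sxx$2$2 - \<beta>^2/(1-\<rho>^2)"
proof -
  define D where "D = 1 - \<rho>^2"
  have D0: "D \<noteq> 0" using r by (simp add: D_def)
  define B :: "real^2^2" where "B = (\<chi> i j. (if i = j then 1 else - \<rho>) / D)"
  have B: "B$1$1 = 1/D" "B$1$2 = -\<rho>/D" "B$2$1 = -\<rho>/D" "B$2$2 = 1/D"
    by (simp_all add: B_def)
  have mm: "(X ** Y)$i$j = X$i$1 * Y$1$j + X$i$2 * Y$2$j" for X Y :: "real^2^2" and i j
    by (simp add: matrix_matrix_mult_def sum_2)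
  have m1: "Syy ** B = mat 1"
    unfolding vec_eq_iff forall_2 using D0 by (simp add: mm y B mat_def D_def field_simps power2_eq_square)
  have m2: "B ** Syy = mat 1"
    unfolding vec_eq_iff forall_2 using D0 by (simp add: mm y B mat_def D_def field_simps power2_eq_square)
  have inv: "matrix_inv Syy = B"
    unfolding matrix_inv_def
  proof (rule some_equality)
    show "Syy ** B = mat 1 \<and> B ** Syy = mat 1" using m1 m2 by simp
    fix A' assume "Syy ** A' = mat 1 \<and> A' ** Syy = mat 1"
    then have "A' = A' ** (Syy ** B)" "A' ** Syy = mat 1" using m1 by auto
    then show "A' = B" by (simp add: matrix_mul_assoc)
  qed
  have t: "transpose Sxy $ i $ j = Sxy $ j $ i" for i j by (simp add: transpose_def)
  show "(Sxx - Sxy ** matrix_inv Syy ** transpose Sxy)$1$1 = Sxx$1$1 - \<alpha>^2/(1-\<rho>^2)"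
    unfolding inv using D0 by (simp add: mm t x B D_def field_simps power2_eq_square)
  show "(Sxx - Sxy ** matrix_inv Syy ** transpose Sxy)$1$2 = Sxx$1$2 + \<rho>*\<alpha>*\<beta>/(1-\<rho>^2)"
    unfolding inv using D0 by (simp add: mm t x B D_def field_simps power2_eq_square)
  show "(Sxx - Sxy ** matrix_inv Syy ** transpose Sxy)$2$2 = Sxx$2$2 - \<beta>^2/(1-\<rho>^2)"
    unfolding inv using D0 by (simp add: mm t x B D_def field_simps power2_eq_square)
qed


lemma find_interval:
  fixes L \<delta> t :: real and k :: nat
  assumes "\<delta> > 0" "L = real k * \<delta>" "k \<ge> 1" "0 \<le> t" "t \<le> L"
  shows "\<exists>i\<in>{1..k}. t \<in> {(real i - 1) * \<delta> .. real i * \<delta>}"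
proof (cases "t = 0")
  case True
  then show ?thesis using assms by (intro bexI[of _ 1]) auto
next
  case False
  define x where "x = t / \<delta>"
  have x0: "0 < x" using False assms by (simp add: x_def)
  have xk: "x \<le> real k" using assms by (simp add: x_def field_simps)
  define i where "i = nat \<lceil>x\<rceil>"
  have c1: "real_of_int \<lceil>x\<rceil> - 1 < x" "x \<le> real_of_int \<lceil>x\<rceil>" by linarith+
  have ipos: "1 \<le> \<lceil>x\<rceil>" using x0 by simp
  have ri: "real i = real_of_int \<lceil>x\<rceil>" using ipos by (simp add: i_def)
  have "i \<ge> 1" using ipos unfolding i_def by linarith
  moreover have "i \<le> k" using xk by (simp add: i_def ceiling_le_iff nat_le_iff) 
  moreover have "(real i - 1) * \<delta> \<le> t" using c1 ri assms(1)
    by (simp add: x_def field_simps)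
  moreover have "t \<le> real i * \<delta>"
  proof -
    have "t = x * \<delta>" using assms(1) by (simp add: x_def)
    also have "\<dots> \<le> real_of_int \<lceil>x\<rceil> * \<delta>" by (rule mult_right_mono[OF c1(2)]) (use assms(1) in simp)
    finally show ?thesis using ri by simp
  qed
  ultimately show ?thesis by (intro bexI[of _ i]) auto
qed

lemma not_sing:
  fixes \<gamma> :: "real \<Rightarrow> real^'d"
  assumes "L > 0" "c0 > 0" "t1 \<in> {0..L}" "t2 \<in> {0..L}" "(t1, t2) \<notin> sing_set \<gamma> L E c0"
  shows "\<bar>cov_r \<gamma> E t1 t2\<bar> \<le> 1/2"
proof (rule ccontr)
  assume big: "\<not> \<bar>cov_r \<gamma> E t1 t2\<bar> \<le> 1/2"
  define k where "k = nat \<lfloor>L * sqrt (real E) / c0\<rfloor> + 1"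
  define \<delta> where "\<delta> = L / real k"
  define I where "I = (\<lambda>i::nat. {(real i - 1) * \<delta> .. real i * \<delta>})"
  have k1: "k \<ge> 1" by (simp add: k_def)
  have d0: "\<delta> > 0" using assms(1) k1 by (simp add: \<delta>_def)
  have Lk: "L = real k * \<delta>" using k1 by (simp add: \<delta>_def)
  have "\<exists>i\<in>{1..k}. t1 \<in> I i"
    using find_interval[OF d0 Lk k1, of t1] assms(3) unfolding I_def by simp
  then obtain i where i: "i \<in> {1..k}" "t1 \<in> I i" by blast
  have "\<exists>j\<in>{1..k}. t2 \<in> I j"
    using find_interval[OF d0 Lk k1, of t2] assms(4) unfolding I_def by simp
  then obtain j where j: "j \<in> {1..k}" "t2 \<in> I j" by blast
  have "(t1, t2) \<in> \<Union>{I i \<times> I j | i j. i \<in> {1..k} \<and> j \<in> {1..k} \<and>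
                 (\<exists>s1\<in>I i. \<exists>s2\<in>I j. \<bar>cov_r \<gamma> E s1 s2\<bar> > 1/2)}"
  proof (rule UnionI)
    have w: "\<exists>s1\<in>I i. \<exists>s2\<in>I j. \<bar>cov_r \<gamma> E s1 s2\<bar> > 1/2"
      using i(2) j(2) big by (intro bexI[of _ t1] bexI[of _ t2]) auto
    show "I i \<times> I j \<in> {I i \<times> I j | i j. i \<in> {1..k} \<and> j \<in> {1..k} \<and>
                 (\<exists>s1\<in>I i. \<exists>s2\<in>I j. \<bar>cov_r \<gamma> E s1 s2\<bar> > 1/2)}"
      using i(1) j(1) w by blast
    show "(t1, t2) \<in> I i \<times> I j" using i(2) j(2) by simp
  qed
  then have "(t1, t2) \<in> sing_set \<gamma> L E c0"
    unfolding sing_set_def Let_def k_def[symmetric] \<delta>_def[symmetric] I_def .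
  then show False using assms(5) by simp
qed


lemma sqrt_ge_min: assumes "0 \<le> X" "0 \<le> Y" shows "min X Y \<le> sqrt (X*Y)"
proof -
  have "(min X Y)^2 \<le> X*Y"
    using assms by (cases "X \<le> Y") (auto simp: power2_eq_square min_def intro: mult_mono)
  then show ?thesis using assms by (simp add: real_le_rsqrt)
qed

lemma small_case:
  fixes e l \<rho> \<alpha> \<beta> \<kappa> :: real
  assumes e: "e > 0" and l: "l > 0" and r: "\<bar>\<rho>\<bar> \<le> 1/2"
  assumes lam_def: "lam = l * e"
    and A_def: "A = 1 - \<rho>^2"
    and Q_def: "Q = \<rho>^2 + \<alpha>^2/e + \<beta>^2/e + \<kappa>^2/e^2"
    and X_def: "X = lam - \<alpha>^2/A"
    and Om12_def: "Om12 = \<kappa> + \<rho>*\<alpha>*\<beta>/A"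
    and Om22_def: "Om22 = lam - \<beta>^2/A"
  assumes Qs: "Q \<le> 1/4" "Q \<le> 3*l/8" "Q \<le> l^2/24"
  assumes q_def: "q = (if X > 0 then Om12 / sqrt X else 0)"
    and c1_def: "c1 = mm^2 * (8/3 + 6/l) + 12 * mm3 / l"
  shows "\<bar>1 / (2*pi* sqrt A) * GP (sqrt X) q (sqrt (Om22 - q^2)) - lam * mm^2 / (2*pi)\<bar>
           \<le> (2 * (l * mm^2 + c1) + c1) * e * Q"
proof -
  have A1: "3/4 \<le> A" "A \<le> 1"
  proof -
    have "\<bar>\<rho>\<bar> * \<bar>\<rho>\<bar> \<le> (1/2) * (1/2)" using r by (intro mult_mono) auto
    then have "\<rho>^2 \<le> 1/4" by (simp add: power2_eq_square abs_mult_self_eq)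
    then show "3/4 \<le> A" "A \<le> 1" by (auto simp: A_def)
  qed
  have A0: "0 < A" using A1 by simp
  have Q0: "0 \<le> Q" unfolding Q_def using e by (intro add_nonneg_nonneg) auto
  have lam0: "0 < lam" using e l by (simp add: lam_def)
  have qa: "\<alpha>^2 \<le> e*Q" "\<beta>^2 \<le> e*Q" "\<kappa>^2 \<le> e^2*Q" "\<rho>^2 \<le> Q"
  proof -
    have t: "0 \<le> \<rho>^2" "0 \<le> \<alpha>^2/e" "0 \<le> \<beta>^2/e" "0 \<le> \<kappa>^2/e^2" using e by auto
    have "\<alpha>^2/e \<le> Q" "\<beta>^2/e \<le> Q" "\<kappa>^2/e^2 \<le> Q" "\<rho>^2 \<le> Q" using t unfolding Q_def by linarith+
    then show "\<alpha>^2 \<le> e*Q" "\<beta>^2 \<le> e*Q" "\<kappa>^2 \<le> e^2*Q" "\<rho>^2 \<le> Q"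
      using e by (simp_all add: pos_divide_le_eq mult.commute)
  qed
  have eQ0: "0 \<le> e*Q" using e Q0 by simp
  have e2Q0: "0 \<le> e^2*Q" "0 \<le> Q*e^2" using Q0 by simp_all
  have invA: "1/A \<le> 4/3" using A1 A0 by (simp add: field_simps)
  have aA: "\<alpha>^2/A \<le> 4/3*(e*Q)" "\<beta>^2/A \<le> 4/3*(e*Q)"
  proof -
    have "\<alpha>^2/A = \<alpha>^2 * (1/A)" by simp
    also have "\<dots> \<le> (e*Q) * (4/3)" using qa invA A0 eQ0 by (intro mult_mono) auto
    finally show "\<alpha>^2/A \<le> 4/3*(e*Q)" by simp
    have "\<beta>^2/A = \<beta>^2 * (1/A)" by simp
    also have "\<dots> \<le> (e*Q) * (4/3)" using qa invA A0 eQ0 by (intro mult_mono) auto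
    finally show "\<beta>^2/A \<le> 4/3*(e*Q)" by simp
  qed
  have aA0: "0 \<le> \<alpha>^2/A" "0 \<le> \<beta>^2/A" using A0 by auto
  have eQl: "4/3*(e*Q) \<le> lam/2"
  proof -
    have "4/3*(e*Q) \<le> 4/3*(e*(3*l/8))" using Qs(2) e by (intro mult_left_mono) auto
    then show ?thesis by (simp add: lam_def mult_ac)
  qed
  have X1: "lam/2 \<le> X" "X \<le> lam" using aA aA0 eQl unfolding X_def by linarith+
  have X0: "0 < X" using X1 lam0 by linarith
  have Om12sq: "Om12^2 \<le> 3*(e^2*Q)"
  proof -
    have "Om12^2 \<le> 2*\<kappa>^2 + 2*(\<rho>*\<alpha>*\<beta>/A)^2"
    proof -
      have "(\<kappa> + \<rho>*\<alpha>*\<beta>/A)^2 + (\<kappa> - \<rho>*\<alpha>*\<beta>/A)^2 = 2*\<kappa>^2 + 2*(\<rho>*\<alpha>*\<beta>/A)^2"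
        by (simp add: power2_eq_square algebra_simps)
      moreover have "0 \<le> (\<kappa> - \<rho>*\<alpha>*\<beta>/A)^2" by simp
      ultimately show ?thesis unfolding Om12_def by linarith
    qed
    moreover have "(\<rho>*\<alpha>*\<beta>/A)^2 \<le> (e^2*Q)/9"
    proof -
      have "(\<rho>*\<alpha>*\<beta>/A)^2 = \<rho>^2 * \<alpha>^2 * \<beta>^2 * (1/A)^2" by (simp add: power_mult_distrib power_divide)
      also have "\<dots> \<le> Q * (e*Q) * (e*Q) * (4/3)^2"
        using qa invA A0 by (intro mult_mono power_mono) (auto simp: Q0 e less_imp_le)
      also have "\<dots> = (e^2*Q) * (Q^2 * 16/9)" by (simp add: power2_eq_square)
      also have "\<dots> \<le> (e^2*Q) * ((1/16) * 16/9)"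
      proof -
        have "Q*Q \<le> (1/4)*(1/4)" using Qs(1) Q0 by (intro mult_mono) auto
        then have "Q^2 \<le> 1/16" by (simp add: power2_eq_square)
        then show ?thesis using Q0 e by (intro mult_left_mono divide_right_mono mult_right_mono) auto
      qed
      finally show ?thesis by simp
    qed
    moreover have "\<kappa>^2 \<le> e^2*Q" by (rule qa)
    moreover have "0 \<le> e^2*Q" using Q0 by simp
    ultimately show ?thesis by linarith
  qed
  have q_eq: "q = Om12 / sqrt X" using X0 by (simp add: q_def)
  have qsq: "q^2 = Om12^2 / X" using X0 by (simp add: q_eq power_divide)
  have qsq_le: "q^2 \<le> 6*(e*Q)/l"
  proof -
    have "q^2 \<le> 3*(e^2*Q) / (lam/2)"
      unfolding qsq using Om12sq X1 lam0 e2Q0 by (intro frac_le) auto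
    also have "\<dots> = 6*(e*Q)/l" using e l by (simp add: lam_def power2_eq_square field_simps)
    finally show ?thesis .
  qed
  define Y where "Y = Om22 - q^2"
  have Y1: "lam/4 \<le> Y" "Y \<le> lam"
  proof -
    have "6*(e*Q)/l \<le> 6*(e*(l^2/24))/l" using Qs(3) e l by (intro divide_right_mono mult_left_mono) auto
    also have "\<dots> = lam/4" using l by (simp add: lam_def power2_eq_square field_simps)
    finally have "q^2 \<le> lam/4" using qsq_le by linarith
    then show "lam/4 \<le> Y" using aA aA0 eQl unfolding Y_def Om22_def by linarith
    have "0 \<le> q^2" by simp
    then show "Y \<le> lam" using aA0 unfolding Y_def Om22_def by linarith
  qed
  have Y0: "0 < Y" using Y1 lam0 by linarith
  define G where "G = GP (sqrt X) q (sqrt Y)"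
  have ps: "sqrt X * \<bar>sqrt Y\<bar> = sqrt (X*Y)" using Y0 by (simp add: real_sqrt_mult)
  have Glow: "sqrt (X*Y) * mm * mm \<le> G"
    using GP_lower[of "sqrt X" "sqrt Y" q] X0 unfolding G_def ps[symmetric] by simp
  have Gup: "G \<le> sqrt (X*Y) * mm * mm + 12*(e*Q)/l * mm3"
  proof -
    have "G \<le> sqrt X * \<bar>sqrt Y\<bar> * mm * mm + sqrt X * q^2 / \<bar>sqrt Y\<bar> * mm3"
      unfolding G_def using X0 Y0 by (intro GP_upper) auto
    moreover have h2: "sqrt X * q^2 / \<bar>sqrt Y\<bar> \<le> 12*(e*Q)/l"
    proof -
      have sY: "sqrt lam / 2 \<le> sqrt Y"
      proof -
        have "sqrt (lam/4) \<le> sqrt Y" using Y1 by simp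
        moreover have "sqrt (lam/4) = sqrt lam / 2" by (simp add: real_sqrt_divide)
        ultimately show ?thesis by simp
      qed
      have sX: "sqrt X \<le> sqrt lam" using X1 by simp
      have "sqrt X \<le> 2 * sqrt Y" using sX sY by linarith
      then have "sqrt X / sqrt Y \<le> 2"
        using Y0 by (simp add: divide_le_eq)
      then have "sqrt X / sqrt Y * q^2 \<le> 2 * q^2"
        by (rule mult_right_mono) simp
      then have "sqrt X * q^2 / \<bar>sqrt Y\<bar> \<le> 2 * q^2"
        using Y0 by (simp add: field_simps)
      also have "\<dots> \<le> 2 * (6*(e*Q)/l)" using qsq_le by simp
      finally show ?thesis by simp
    qed
    moreover have "sqrt X * q^2 / \<bar>sqrt Y\<bar> * mm3 \<le> 12*(e*Q)/l * mm3"
      using h2 mm3_nonneg by (rule mult_right_mono)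
    ultimately show ?thesis unfolding ps by linarith
  qed
  have sq: "\<bar>sqrt (X*Y) - lam\<bar> \<le> (lam - X) + (lam - Y)"
  proof -
    have "sqrt (X*Y) \<le> sqrt (lam*lam)" using X1 Y1 X0 Y0 by (intro real_sqrt_le_mono mult_mono) auto
    then have u: "sqrt (X*Y) \<le> lam" using lam0 by simp
    have "min X Y \<le> sqrt (X*Y)" using X0 Y0 by (intro sqrt_ge_min) auto
    then show ?thesis using u X1 Y1 by (simp add: min_def split: if_splits)
  qed
  have lX: "lam - X \<le> 4/3*(e*Q)" using aA unfolding X_def by linarith
  have lY: "lam - Y \<le> 4/3*(e*Q) + 6*(e*Q)/l" using aA qsq_le unfolding Y_def Om22_def by linarith
  have mm0: "0 \<le> mm" "0 \<le> mm3" by (rule mm_nonneg, rule mm3_nonneg)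
  have Gdiff: "\<bar>G - lam*mm^2\<bar> \<le> c1 * (e*Q)"
  proof -
    have "\<bar>sqrt (X*Y) - lam\<bar> * mm^2 \<le> ((8/3 + 6/l)*(e*Q)) * mm^2"
      using sq lX lY by (intro mult_right_mono) (auto simp: field_simps)
    moreover have "\<bar>G - lam*mm^2\<bar> \<le> \<bar>sqrt (X*Y) - lam\<bar> * mm^2 + 12*(e*Q)/l * mm3"
    proof -
      have "\<bar>sqrt (X*Y) * mm * mm - lam*mm^2\<bar> = \<bar>sqrt (X*Y) - lam\<bar> * mm^2"
        by (simp add: power2_eq_square abs_mult left_diff_distrib[symmetric] mult.assoc)
      moreover have "0 \<le> 12*(e*Q)/l * mm3" using e l Q0 mm0 by auto
      ultimately show ?thesis using Glow Gup by linarith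
    qed
    ultimately have "\<bar>G - lam*mm^2\<bar> \<le> ((8/3 + 6/l)*(e*Q)) * mm^2 + 12*(e*Q)/l * mm3" by linarith
    also have "\<dots> = c1 * (e*Q)" by (simp add: c1_def field_simps)
    finally show ?thesis .
  qed
  have c10: "0 \<le> c1" using mm0 l by (simp add: c1_def)
  have "0 \<le> sqrt (X*Y) * mm * mm" using mm0 X0 Y0 by (intro mult_nonneg_nonneg) auto
  then have G0: "0 \<le> G" using Glow by linarith
  have Gle: "G \<le> e * (l*mm^2 + c1)"
  proof -
    have "G \<le> lam*mm^2 + c1*(e*Q)" using Gdiff by linarith
    also have "\<dots> \<le> lam*mm^2 + c1*(e*1)" using Qs(1) c10 e by (intro add_left_mono mult_left_mono) auto
    finally show ?thesis by (simp add: lam_def field_simps)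
  qed
  have sA: "A \<le> sqrt A" "sqrt A \<le> 1" "0 < sqrt A"
  proof -
    have "A*A \<le> A*1" using A1 A0 by (intro mult_left_mono) auto
    then have "A^2 \<le> A" by (simp add: power2_eq_square)
    then show "A \<le> sqrt A" using A0 by (simp add: real_le_rsqrt)
    show "sqrt A \<le> 1" using A1 by simp
    show "0 < sqrt A" using A0 by simp
  qed
  have inv1: "0 \<le> 1/sqrt A - 1" "1/sqrt A - 1 \<le> 2*Q"
  proof -
    show "0 \<le> 1/sqrt A - 1" using sA by (simp add: field_simps)
    have "1/sqrt A \<le> 1/A" using sA A0 by (intro divide_left_mono) auto
    also have "1/A = 1 + \<rho>^2/A" using A0 by (simp add: A_def field_simps)
    also have "\<rho>^2/A \<le> 2*Q"
    proof -
      have "\<rho>^2/A = \<rho>^2 * (1/A)" by simp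
      also have "\<dots> \<le> Q * 2" using qa invA A0 Q0 by (intro mult_mono) auto
      finally show ?thesis by simp
    qed
    finally show "1/sqrt A - 1 \<le> 2*Q" by simp
  qed
  have key: "1 / (2*pi* sqrt A) * G - lam * mm^2 / (2*pi) = (G * (1/sqrt A - 1) + (G - lam*mm^2)) / (2*pi)"
    using sA by (simp add: field_simps)
  have "\<bar>G * (1/sqrt A - 1) + (G - lam*mm^2)\<bar> \<le> G * (1/sqrt A - 1) + c1*(e*Q)"
  proof -
    have a0: "0 \<le> G * (1/sqrt A - 1)" using G0 inv1(1) by (rule mult_nonneg_nonneg)
    have "\<bar>G * (1/sqrt A - 1) + (G - lam*mm^2)\<bar> \<le> \<bar>G * (1/sqrt A - 1)\<bar> + \<bar>G - lam*mm^2\<bar>"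
      by (rule abs_triangle_ineq)
    then show ?thesis using a0 Gdiff by simp
  qed
  also have "\<dots> \<le> (e * (l*mm^2 + c1)) * (2*Q) + c1*(e*Q)"
    using G0 Gle inv1 by (intro add_right_mono mult_mono) auto
  also have "\<dots> = (2 * (l * mm^2 + c1) + c1) * e * Q" by (simp add: field_simps)
  finally have num: "\<bar>G * (1/sqrt A - 1) + (G - lam*mm^2)\<bar> \<le> (2 * (l * mm^2 + c1) + c1) * e * Q" .
  have pos: "0 \<le> (2 * (l * mm^2 + c1) + c1) * e * Q" using num by linarith
  have "\<bar>1 / (2*pi* sqrt A) * G - lam * mm^2 / (2*pi)\<bar> = \<bar>G * (1/sqrt A - 1) + (G - lam*mm^2)\<bar> / (2*pi)"
    unfolding key by simp
  also have "\<dots> \<le> \<bar>G * (1/sqrt A - 1) + (G - lam*mm^2)\<bar>"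
  proof -
    let ?a = "\<bar>G * (1/sqrt A - 1) + (G - lam*mm^2)\<bar>"
    have "?a * 1 \<le> ?a * (2*pi)" using pi_gt3 by (intro mult_left_mono) auto
    then show ?thesis using pi_gt3 by (simp add: divide_le_eq)
  qed
  also note num
  finally show ?thesis unfolding G_def Y_def .
qed


lemma abs_sqrt: "\<bar>sqrt x\<bar> = sqrt \<bar>x\<bar>"
  by (cases "x \<ge> 0") (auto simp: real_sqrt_minus[symmetric])

lemma big_case:
  fixes e l \<rho> \<alpha> \<beta> \<kappa> :: real
  assumes e: "e > 0" and l: "l > 0" and r: "\<bar>\<rho>\<bar> \<le> 1/2"
    and ab: "\<alpha>^2 \<le> 4*pi^2*e" "\<beta>^2 \<le> 4*pi^2*e" "\<kappa>^2 \<le> (4*pi^2*e)^2"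
  assumes lam_def: "lam = l * e"
    and A_def: "A = 1 - \<rho>^2"
    and X_def: "X = lam - \<alpha>^2/A"
    and Om12_def: "Om12 = \<kappa> + \<rho>*\<alpha>*\<beta>/A"
    and Om22_def: "Om22 = lam - \<beta>^2/A"
    and q_def: "q = (if X > 0 then Om12 / sqrt X else 0)"
  shows "\<bar>1 / (2*pi* sqrt A) * GP (sqrt X) q (sqrt (Om22 - q^2)) - lam * mm^2 / (2*pi)\<bar>
           \<le> ((l + 7*pi^2) * (1 + 2*mm^2) + l*mm^2) * e"
proof -
  define M where "M = e * (l + 7*pi^2)"
  have A1: "3/4 \<le> A" "A \<le> 1"
  proof -
    have "\<bar>\<rho>\<bar> * \<bar>\<rho>\<bar> \<le> (1/2) * (1/2)" using r by (intro mult_mono) auto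
    then have "\<rho>^2 \<le> 1/4" by (simp add: power2_eq_square abs_mult_self_eq)
    then show "3/4 \<le> A" "A \<le> 1" by (auto simp: A_def)
  qed
  have A0: "0 < A" using A1 by simp
  have invA: "1/A \<le> 4/3" using A1 A0 by (simp add: field_simps)
  have lam0: "0 < lam" using e l by (simp add: lam_def)
  have pe: "0 \<le> pi^2 * e" "0 \<le> e * pi^2" using e by simp_all
  have aA: "\<alpha>^2/A \<le> 16/3*pi^2*e" "\<beta>^2/A \<le> 16/3*pi^2*e"
  proof -
    have "\<alpha>^2/A = \<alpha>^2 * (1/A)" by simp
    also have "\<dots> \<le> (4*pi^2*e) * (4/3)" using ab invA A0 pe by (intro mult_mono) auto
    finally show "\<alpha>^2/A \<le> 16/3*pi^2*e" by simp
    have "\<beta>^2/A = \<beta>^2 * (1/A)" by simp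
    also have "\<dots> \<le> (4*pi^2*e) * (4/3)" using ab invA A0 pe by (intro mult_mono) auto
    finally show "\<beta>^2/A \<le> 16/3*pi^2*e" by simp
  qed
  have aA0: "0 \<le> \<alpha>^2/A" "0 \<le> \<beta>^2/A" using A0 by auto
  have bX: "\<bar>X\<bar> \<le> M" "\<bar>Om22\<bar> \<le> M"
    using aA aA0 lam0 pe unfolding X_def Om22_def M_def lam_def by (auto simp: algebra_simps abs_if)
  have bk: "\<bar>\<kappa>\<bar> \<le> 4*pi^2*e"
  proof -
    have "sqrt (\<kappa>^2) \<le> sqrt ((4*pi^2*e)^2)" using ab(3) by (rule real_sqrt_le_mono)
    then show ?thesis using e by simp
  qed
  have bab: "\<bar>\<alpha>*\<beta>\<bar> \<le> 4*pi^2*e"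
  proof -
    have "2*\<bar>\<alpha>\<bar>*\<bar>\<beta>\<bar> \<le> \<alpha>^2 + \<beta>^2"
    proof -
      have "0 \<le> (\<bar>\<alpha>\<bar> - \<bar>\<beta>\<bar>)^2" by simp
      then show ?thesis by (simp add: power2_eq_square algebra_simps abs_mult_self_eq)
    qed
    then show ?thesis using ab by (simp add: abs_mult)
  qed
  have b12: "\<bar>Om12\<bar> \<le> M"
  proof -
    have "\<bar>\<rho>*\<alpha>*\<beta>/A\<bar> = \<bar>\<rho>\<bar> * \<bar>\<alpha>*\<beta>\<bar> * (1/A)" using A0 by (simp add: abs_mult)
    also have "\<dots> \<le> (1/2) * (4*pi^2*e) * (4/3)"
      using r bab invA A0 pe by (intro mult_mono) auto
    finally have h1: "\<bar>\<rho>*\<alpha>*\<beta>/A\<bar> \<le> 8/3*(pi^2*e)" by (simp add: mult_ac)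
    have h2: "\<bar>\<kappa>\<bar> \<le> 4*(pi^2*e)" using bk by (simp add: mult_ac)
    have "\<bar>Om12\<bar> \<le> 4*(pi^2*e) + 8/3*(pi^2*e)" unfolding Om12_def
      by (rule order.trans[OF abs_triangle_ineq add_mono[OF h2 h1]])
    also have "\<dots> \<le> M" unfolding M_def using e l pe by (simp add: algebra_simps)
    finally show ?thesis .
  qed
  have M0: "0 \<le> M" using bX by linarith
  define s where "s = sqrt (Om22 - q^2)"
  have pq: "\<bar>sqrt X\<bar> * \<bar>q\<bar> \<le> M"
  proof (cases "X > 0")
    case True
    then have "\<bar>sqrt X\<bar> * \<bar>q\<bar> = \<bar>Om12\<bar>" by (simp add: q_def abs_mult)
    then show ?thesis using b12 by simp
  next
    case False then show ?thesis using M0 by (simp add: q_def)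
  qed
  have Xq: "\<bar>X\<bar> * q^2 \<le> Om12^2"
  proof (cases "X > 0")
    case True
    then show ?thesis by (simp add: q_def power_divide)
  next
    case False then show ?thesis by (simp add: q_def)
  qed
  have ps: "\<bar>sqrt X\<bar> * \<bar>s\<bar> \<le> 2*M"
  proof -
    have "\<bar>sqrt X\<bar> * \<bar>s\<bar> = sqrt (\<bar>X\<bar> * \<bar>Om22 - q^2\<bar>)"
      by (simp add: s_def abs_sqrt real_sqrt_mult)
    also have "\<dots> \<le> sqrt (M*M + M*M)"
    proof (rule real_sqrt_le_mono)
      have "\<bar>X\<bar> * \<bar>Om22 - q^2\<bar> \<le> \<bar>X\<bar> * (\<bar>Om22\<bar> + q^2)"
      proof (rule mult_left_mono)
        have "\<bar>Om22 - q^2\<bar> \<le> \<bar>Om22\<bar> + \<bar>q^2\<bar>" by (rule abs_triangle_ineq4)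
        then show "\<bar>Om22 - q^2\<bar> \<le> \<bar>Om22\<bar> + q^2" by simp
      qed simp
      also have "\<dots> = \<bar>X\<bar> * \<bar>Om22\<bar> + \<bar>X\<bar> * q^2" by (simp add: algebra_simps)
      also have "\<dots> \<le> M*M + Om12^2" using Xq bX by (intro add_mono mult_mono) auto
      also have "Om12^2 \<le> M*M"
      proof -
        have "\<bar>Om12\<bar> * \<bar>Om12\<bar> \<le> M*M" using b12 by (intro mult_mono) auto
        then show ?thesis by (simp add: power2_eq_square abs_mult_self_eq)
      qed
      finally show "\<bar>X\<bar> * \<bar>Om22 - q^2\<bar> \<le> M*M + M*M" by simp
    qed
    also have "\<dots> \<le> sqrt ((2*M)^2)" by (rule real_sqrt_le_mono) (simp add: power2_eq_square M0)
    also have "\<dots> = 2*M" using M0 by (simp only: real_sqrt_abs)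
    finally show ?thesis .
  qed
  define G where "G = GP (sqrt X) q s"
  have Gb: "\<bar>G\<bar> \<le> M + 2*M*mm*mm"
  proof -
    have "\<bar>G\<bar> \<le> \<bar>sqrt X\<bar> * \<bar>q\<bar> + \<bar>sqrt X\<bar> * \<bar>s\<bar> * mm * mm" unfolding G_def by (rule GP_abs)
    moreover have "\<bar>sqrt X\<bar> * \<bar>s\<bar> * mm * mm \<le> 2*M * mm * mm"
      using ps mm_nonneg by (intro mult_right_mono) auto
    ultimately show ?thesis using pq by linarith
  qed
  have sA: "3/4 \<le> sqrt A"
  proof -
    have "A*A \<le> A*1" using A1 A0 by (intro mult_left_mono) auto
    then have "A^2 \<le> A" by (simp add: power2_eq_square)
    then have "A \<le> sqrt A" using A0 by (simp add: real_le_rsqrt)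
    then show ?thesis using A1 by linarith
  qed
  have c1: "1 \<le> 2*pi* sqrt A"
  proof -
    have "1 \<le> 2*3*(3/4::real)" by simp
    also have "\<dots> \<le> 2*pi* sqrt A" using pi_gt3 sA by (intro mult_mono) auto
    finally show ?thesis .
  qed
  have k1: "\<bar>1 / (2*pi* sqrt A) * G\<bar> \<le> \<bar>G\<bar>"
  proof -
    have "\<bar>1 / (2*pi* sqrt A) * G\<bar> = \<bar>G\<bar> / (2*pi* sqrt A)" using c1 A0 by (simp add: abs_mult)
    also have "\<dots> \<le> \<bar>G\<bar>"
    proof -
      have "\<bar>G\<bar> * 1 \<le> \<bar>G\<bar> * (2*pi* sqrt A)" using c1 by (intro mult_left_mono) auto
      then show ?thesis using c1 by (simp add: divide_le_eq)
    qed
    finally show ?thesis .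
  qed
  have k2: "0 \<le> lam * mm^2 / (2*pi)" "lam * mm^2 / (2*pi) \<le> lam * mm^2"
  proof -
    show "0 \<le> lam * mm^2 / (2*pi)" using lam0 by simp
    have "lam * mm^2 * 1 \<le> lam * mm^2 * (2*pi)" using lam0 pi_gt3 by (intro mult_left_mono) auto
    then show "lam * mm^2 / (2*pi) \<le> lam * mm^2" using pi_gt3 by (simp add: divide_le_eq)
  qed
  have "\<bar>1 / (2*pi* sqrt A) * G - lam * mm^2 / (2*pi)\<bar> \<le> \<bar>G\<bar> + lam * mm^2"
    using k1 k2 by linarith
  also have "\<dots> \<le> (M + 2*M*mm*mm) + lam * mm^2" using Gb by linarith
  also have "\<dots> = ((l + 7*pi^2) * (1 + 2*mm^2) + l*mm^2) * e"
    by (simp add: M_def lam_def power2_eq_square algebra_simps)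
  finally show ?thesis unfolding G_def s_def .
qed


lemma gae: "gauss_abs_exp w = \<bar>sqrt w\<bar> * mm"
proof -
  have "gauss_abs_exp w = (LINT z|lborel. \<bar>sqrt w\<bar> * (phi z * \<bar>z\<bar>))"
    unfolding gauss_abs_exp_def by (intro Bochner_Integration.integral_cong refl) (simp add: abs_mult mult_ac)
  then show ?thesis by (simp add: mm_def)
qed

lemma gape: "gauss_abs_prod_exp a b c =
   GP (sqrt a) (if a > 0 then b / sqrt a else 0) (sqrt (c - (if a > 0 then b / sqrt a else 0)^2))"
  unfolding gauss_abs_prod_exp_def GP_def Let_def ..

theorem lemma2p9:
  fixes \<gamma> :: "real \<Rightarrow> real^'d" and L :: real
  assumes "CARD('d) \<ge> 3"
    and "L > 0"
    and "\<exists>S. {0..L} \<subseteq> S \<and> smooth_on S \<gamma>"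
    and "\<forall>t\<in>{0..L}. norm (vector_derivative \<gamma> (at t)) = 1"
  shows "\<exists>c>0. \<forall>c0. 0 < c0 \<and> c0 \<le> c \<longrightarrow>
           (\<exists>C. \<forall>E::nat. E > 0 \<longrightarrow> (lattice_pts E :: (int^'d) set) \<noteq> {} \<longrightarrow>
              (\<forall>t1 t2. t1 \<in> {0..L} \<and> t2 \<in> {0..L} \<and> (t1, t2) \<notin> sing_set \<gamma> L E c0 \<longrightarrow>
                 \<bar>K2 \<gamma> E t1 t2 - K1 \<gamma> E t1 * K1 \<gamma> E t2\<bar>
                   \<le> C * real E * ((cov_r \<gamma> E t1 t2)^2
                        + (cov_r1 \<gamma> E t1 t2 / sqrt (real E))^2
                        + (cov_r2 \<gamma> E t1 t2 / sqrt (real E))^2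
                        + (cov_r12 \<gamma> E t1 t2 / real E)^2)))"
proof -
  obtain S where S: "{0..L} \<subseteq> S" "smooth_on S \<gamma>" using assms(3) by blast
  then obtain D :: "nat \<Rightarrow> real \<Rightarrow> real^'d" where So: "open S" and D0: "\<forall>t\<in>S. D 0 t = \<gamma> t"
    and Dd: "\<forall>n. \<forall>t\<in>S. (D n has_vector_derivative D (Suc n) t) (at t)"
    unfolding smooth_on_def by blast
  define g where "g = D 1"
  have dg: "(\<gamma> has_vector_derivative g t) (at t)" if "t \<in> S" for t
  proof -
    have "(D 0 has_vector_derivative D (Suc 0) t) (at t)" using Dd that by blast
    then show ?thesis unfolding g_def One_nat_def
      by (rule has_vector_derivative_transform_within_open[OF _ So that]) (use D0 in auto)
  qed
  interpret curve \<gamma> g S by unfold_locales (fact So, fact dg)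
  have ng: "norm (g t) = 1" if "t \<in> {0..L}" for t
  proof -
    have "vector_derivative \<gamma> (at t) = g t" using dg S(1) that by (intro vector_derivative_at) auto
    then show ?thesis using assms(4) that by (metis)
  qed
  define dd where "dd = real CARD('d)"
  have dd0: "0 < dd" by (simp add: dd_def)
  define l where "l = 4*pi^2 / dd"
  have l0: "0 < l" using dd0 by (simp add: l_def)
  define \<epsilon> where "\<epsilon> = min (1/4) (min (3*l/8) (l^2/24))"
  have \<epsilon>0: "0 < \<epsilon>" using l0 by (simp add: \<epsilon>_def)
  define c1 where "c1 = mm^2 * (8/3 + 6/l) + 12 * mm3 / l"
  define Cs where "Cs = 2 * (l * mm^2 + c1) + c1"
  define Cb where "Cb = (l + 7*pi^2) * (1 + 2*mm^2) + l*mm^2"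
  have c10: "0 \<le> c1" using l0 mm_nonneg mm3_nonneg by (simp add: c1_def)
  have Cs0: "0 \<le> Cs" using c10 l0 by (simp add: Cs_def)
  have Cb0: "0 \<le> Cb" using l0 by (simp add: Cb_def add_nonneg_nonneg)
  show ?thesis
  proof (rule exI[of _ "1::real"], intro conjI allI impI)
    show "(0::real) < 1" by simp
    fix c0 :: real assume c0: "0 < c0 \<and> c0 \<le> 1"
    show "\<exists>C. \<forall>E::nat. E > 0 \<longrightarrow> (lattice_pts E :: (int^'d) set) \<noteq> {} \<longrightarrow>
              (\<forall>t1 t2. t1 \<in> {0..L} \<and> t2 \<in> {0..L} \<and> (t1, t2) \<notin> sing_set \<gamma> L E c0 \<longrightarrow>
                 \<bar>K2 \<gamma> E t1 t2 - K1 \<gamma> E t1 * K1 \<gamma> E t2\<bar>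
                   \<le> C * real E * ((cov_r \<gamma> E t1 t2)^2
                        + (cov_r1 \<gamma> E t1 t2 / sqrt (real E))^2
                        + (cov_r2 \<gamma> E t1 t2 / sqrt (real E))^2
                        + (cov_r12 \<gamma> E t1 t2 / real E)^2))"
    proof (intro exI[of _ "Cs + Cb / \<epsilon>"] allI impI)
      fix E :: nat and t1 t2 :: real
      assume E0: "E > 0" and ne: "(lattice_pts E :: (int^'d) set) \<noteq> {}"
        and H: "t1 \<in> {0..L} \<and> t2 \<in> {0..L} \<and> (t1, t2) \<notin> sing_set \<gamma> L E c0"
      have t1: "t1 \<in> {0..L}" and t2: "t2 \<in> {0..L}" using H by auto
      have t1S: "t1 \<in> S" and t2S: "t2 \<in> S" using t1 t2 S(1) by auto
      define e where "e = real E"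
      have e0: "0 < e" using E0 by (simp add: e_def)
      define \<rho> where "\<rho> = cov_r \<gamma> E t1 t2"
      define \<alpha> where "\<alpha> = cov_r1 \<gamma> E t1 t2"
      define \<beta> where "\<beta> = cov_r2 \<gamma> E t1 t2"
      define \<kappa> where "\<kappa> = cov_r12 \<gamma> E t1 t2"
      define lam where "lam = l * e"
      have r: "\<bar>\<rho>\<bar> \<le> 1/2" unfolding \<rho>_def
        using not_sing[OF assms(2) conjunct1[OF c0] t1 t2] H by blast
      have \<alpha>R: "\<alpha> = R1 \<gamma> g E t1 t2" unfolding \<alpha>_def by (rule r1_eq[OF t1S])
      have \<beta>R: "\<beta> = R1 \<gamma> g E t2 t1" unfolding \<beta>_def r2_eq[OF t2S] sym_R1[where \<gamma>=\<gamma> and g=g, OF ne] ..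
      have \<kappa>R: "\<kappa> = R12 \<gamma> g E t1 t2" unfolding \<kappa>_def by (rule r12_eq[OF t1S t2S])
      have sqb: "x^2 \<le> B^2" if "\<bar>x\<bar> \<le> B" for x B :: real
        using that by (metis abs_ge_zero order_trans power2_abs power_mono)
      have ab: "\<alpha>^2 \<le> 4*pi^2*e" "\<beta>^2 \<le> 4*pi^2*e" "\<kappa>^2 \<le> (4*pi^2*e)^2"
      proof -
        have sq: "(2*pi* sqrt (real E))^2 = 4*pi^2*e" by (simp add: power_mult_distrib e_def)
        show "\<alpha>^2 \<le> 4*pi^2*e" unfolding \<alpha>R sq[symmetric] by (rule sqb, rule B_R1[where \<gamma>=\<gamma> and g=g, OF ne ng[OF t1]])
        show "\<beta>^2 \<le> 4*pi^2*e" unfolding \<beta>R sq[symmetric] by (rule sqb, rule B_R1[where \<gamma>=\<gamma> and g=g, OF ne ng[OF t2]])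
        show "\<kappa>^2 \<le> (4*pi^2*e)^2" unfolding \<kappa>R e_def by (rule sqb, rule B_R12[where \<gamma>=\<gamma> and g=g, OF ne ng[OF t1] ng[OF t2]])
      qed
      have lamdiag: "cov_r12 \<gamma> E t t = lam" if "t \<in> {0..L}" for t
      proof -
        have "cov_r12 \<gamma> E t t = R12 \<gamma> g E t t" using that S(1) by (intro r12_eq) auto
        also have "\<dots> = 4*pi^2*real E / real CARD('d)" by (rule diag_R12[where \<gamma>=\<gamma> and g=g, OF ne ng[OF that]])
        finally show ?thesis by (simp add: lam_def l_def e_def dd_def)
      qed
      have r1diag: "cov_r1 \<gamma> E t t = 0" if "t \<in> {0..L}" for t
        using that S(1) r1_eq[of t E t] diag_R1[where \<gamma>=\<gamma> and g=g, OF ne] by auto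
      have rdiag: "cov_r \<gamma> E t t = 1" for t by (rule diag_r[where \<gamma>=\<gamma>, OF ne])
      have lam0: "0 < lam" using l0 e0 by (simp add: lam_def)
      have K1e: "K1 \<gamma> E t = 1 / sqrt (2*pi) * (sqrt lam * mm)" if "t \<in> {0..L}" for t
        unfolding K1_def gae using lamdiag[OF that] r1diag[OF that] rdiag[of t] lam0 by simp
      have K1K1: "K1 \<gamma> E t1 * K1 \<gamma> E t2 = lam * mm^2 / (2*pi)"
        unfolding K1e[OF t1] K1e[OF t2] using lam0
        by (simp add: power2_eq_square field_simps real_sqrt_mult[symmetric])
      define A where "A = 1 - \<rho>^2"
      have rr: "\<rho>^2 \<noteq> 1"
      proof -
        have "\<bar>\<rho>\<bar> * \<bar>\<rho>\<bar> \<le> (1/2) * (1/2)" using r by (intro mult_mono) auto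
        then show ?thesis by (simp add: power2_eq_square abs_mult_self_eq)
      qed
      define \<Omega> where "\<Omega> = cond_cov \<gamma> E t1 t2"
      define tt where "tt = (\<lambda>i::2. if i = 1 then t1 else t2)"
      have tt: "tt 1 = t1" "tt 2 = t2" by (simp_all add: tt_def)
      have \<Omega>e: "\<Omega>$1$1 = lam - \<alpha>^2/A" "\<Omega>$1$2 = \<kappa> + \<rho>*\<alpha>*\<beta>/A" "\<Omega>$2$2 = lam - \<beta>^2/A"
      proof -
        let ?Syy = "(\<chi> i j. cov_r \<gamma> E (tt i) (tt j)) :: real^2^2"
        let ?Sxy = "(\<chi> i j. cov_r1 \<gamma> E (tt i) (tt j)) :: real^2^2"
        let ?Sxx = "(\<chi> i j. cov_r12 \<gamma> E (tt i) (tt j)) :: real^2^2"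
        have \<Omega>d: "\<Omega> = ?Sxx - ?Sxy ** matrix_inv ?Syy ** transpose ?Sxy"
          unfolding \<Omega>_def cond_cov_def tt_def Let_def ..
        have y: "?Syy$1$1 = 1" "?Syy$1$2 = \<rho>" "?Syy$2$1 = \<rho>" "?Syy$2$2 = 1"
          using rdiag sym_r[OF ne, of \<gamma> t2 t1] by (simp_all add: tt \<rho>_def)
        have x: "?Sxy$1$1 = 0" "?Sxy$1$2 = \<alpha>" "?Sxy$2$1 = \<beta>" "?Sxy$2$2 = 0"
        proof -
          show "?Sxy$1$1 = 0" using r1diag[OF t1] by (simp add: tt)
          show "?Sxy$1$2 = \<alpha>" by (simp add: tt \<alpha>_def)
          show "?Sxy$2$1 = \<beta>" using r1_eq[OF t2S, of E t1] \<beta>R by (simp add: tt)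
          show "?Sxy$2$2 = 0" using r1diag[OF t2] by (simp add: tt)
        qed
        have z: "?Sxx$1$1 = lam" "?Sxx$1$2 = \<kappa>" "?Sxx$2$2 = lam"
          using lamdiag[OF t1] lamdiag[OF t2] by (simp_all add: tt \<kappa>_def)
        show "\<Omega>$1$1 = lam - \<alpha>^2/A" unfolding \<Omega>d A_def using mat_schur(1)[OF y rr x, of ?Sxx] z by simp
        show "\<Omega>$1$2 = \<kappa> + \<rho>*\<alpha>*\<beta>/A" unfolding \<Omega>d A_def using mat_schur(2)[OF y rr x, of ?Sxx] z by simp
        show "\<Omega>$2$2 = lam - \<beta>^2/A" unfolding \<Omega>d A_def using mat_schur(3)[OF y rr x, of ?Sxx] z by simp
      qed
      define X where "X = lam - \<alpha>^2/A"
      define Om12 where "Om12 = \<kappa> + \<rho>*\<alpha>*\<beta>/A"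
      define Om22 where "Om22 = lam - \<beta>^2/A"
      define q where "q = (if X > 0 then Om12 / sqrt X else 0)"
      have K2e: "K2 \<gamma> E t1 t2 = 1 / (2*pi* sqrt A) * GP (sqrt X) q (sqrt (Om22 - q^2))"
        unfolding K2_def Let_def \<Omega>_def[symmetric] gape \<Omega>e
        by (simp add: \<rho>_def[symmetric] A_def X_def Om12_def Om22_def q_def)
      define Q where "Q = \<rho>^2 + \<alpha>^2/e + \<beta>^2/e + \<kappa>^2/e^2"
      have Qe: "(cov_r \<gamma> E t1 t2)^2 + (cov_r1 \<gamma> E t1 t2 / sqrt e)^2
              + (cov_r2 \<gamma> E t1 t2 / sqrt e)^2 + (cov_r12 \<gamma> E t1 t2 / e)^2 = Q"
        unfolding Q_def \<rho>_def[symmetric] \<alpha>_def[symmetric] \<beta>_def[symmetric] \<kappa>_def[symmetric]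
        using e0 by (simp add: power_divide)
      have Q0: "0 \<le> Q" unfolding Q_def using e0 by (intro add_nonneg_nonneg) auto
      have lhs: "\<bar>K2 \<gamma> E t1 t2 - K1 \<gamma> E t1 * K1 \<gamma> E t2\<bar>
           = \<bar>1 / (2*pi* sqrt A) * GP (sqrt X) q (sqrt (Om22 - q^2)) - lam * mm^2 / (2*pi)\<bar>"
        unfolding K2e K1K1 ..
      have "\<bar>1 / (2*pi* sqrt A) * GP (sqrt X) q (sqrt (Om22 - q^2)) - lam * mm^2 / (2*pi)\<bar> \<le> (Cs + Cb / \<epsilon>) * e * Q"
      proof (cases "Q \<le> \<epsilon>")
        case True
        have Qs: "Q \<le> 1/4" "Q \<le> 3*l/8" "Q \<le> l^2/24" using True by (auto simp: \<epsilon>_def)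
        have "\<bar>1 / (2*pi* sqrt A) * GP (sqrt X) q (sqrt (Om22 - q^2)) - lam * mm^2 / (2*pi)\<bar> \<le> Cs * e * Q"
          unfolding Cs_def
          by (rule small_case[OF e0 l0 r lam_def A_def Q_def X_def Om12_def Om22_def Qs q_def c1_def])
        also have "\<dots> \<le> (Cs + Cb / \<epsilon>) * e * Q"
          using Cb0 \<epsilon>0 e0 Q0 by (intro mult_right_mono) auto
        finally show ?thesis .
      next
        case False
        have "\<bar>1 / (2*pi* sqrt A) * GP (sqrt X) q (sqrt (Om22 - q^2)) - lam * mm^2 / (2*pi)\<bar> \<le> Cb * e"
          unfolding Cb_def
          by (rule big_case[OF e0 l0 r ab lam_def A_def X_def Om12_def Om22_def q_def])
        also have "\<dots> = (Cb / \<epsilon>) * e * \<epsilon>" using \<epsilon>0 by simp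
        also have "\<dots> \<le> (Cb / \<epsilon>) * e * Q" using False Cb0 \<epsilon>0 e0 by (intro mult_left_mono) auto
        also have "\<dots> \<le> (Cs + Cb / \<epsilon>) * e * Q"
          using Cs0 e0 Q0 by (intro mult_right_mono) auto
        finally show ?thesis .
      qed
      then show "\<bar>K2 \<gamma> E t1 t2 - K1 \<gamma> E t1 * K1 \<gamma> E t2\<bar>
                   \<le> (Cs + Cb / \<epsilon>) * real E * ((cov_r \<gamma> E t1 t2)^2
                        + (cov_r1 \<gamma> E t1 t2 / sqrt (real E))^2
                        + (cov_r2 \<gamma> E t1 t2 / sqrt (real E))^2
                        + (cov_r12 \<gamma> E t1 t2 / real E)^2)"
        unfolding lhs e_def[symmetric] Qe .
    qed
  qed
qed


end
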